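(* Let $B$ be a zero-sum sequence over $C_2^5$ and let $k \in [2,5]$. Then $\max\mathsf{L}(B)=k$ and $|B|= \mathsf{D}_{k}(C_2^5)$ if and only if all of the following hold: $|B|=4+3k$, $B$ is squarefree, $0$ does not occur in $B$, and there exist terms $g_1,\dots, g_{k-2}$ of $B$ (with $g_1\cdots g_{k-2}$ a subsequence of $B$) and a subgroup $H$ of index $2$ in $C_2^5$ such that every term of the sequence obtained from $B$ by removing $g_1,\dots,g_{k-2}$ lies in the non-zero coset $C_2^5\setminus H$.
   Context: $C_2^5$ is the elementary abelian $2$-group of rank $5$. A sequence is a finite unordered list of group elements with repetitions; squarefree means no repetitions; zero-sum means its terms sum to $0$; a minimal zero-sum sequence is a non-empty zero-sum sequence with no proper non-empty zero-sum subsequence; for a zero-sum sequence $B$, $\mathsf{L}(B)$ is the set of all $t$ such that $B$ is a product of $t$ minimal zero-sum sequences. $\mathsf{D}_k(G)$ is the smallest $\ell$ such that every sequence over $G$ of length at least $\ell$ has $k$ disjoint non-empty zero-sum subsequences. $[a,b]$ is the set of integers from $a$ to $b$. *)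

theory Defs
  imports "HOL-Analysis.Analysis" "HOL-Library.Multiset" "HOL-Library.Numeral_Type"
begin

text \<open>The elementary abelian 2-group of rank 5, as vectors of length 5 over
  the integers mod 2 (type 2), with componentwise addition.\<close>
type_synonym C2_5 = "2 ^ 5"

text \<open>Sequences over a finite abelian group are finite multisets.\<close>

definition zero_sum :: "'a::comm_monoid_add multiset \<Rightarrow> bool" where
  "zero_sum S \<longleftrightarrow> sum_mset S = 0"

definition minimal_zero_sum :: "'a::comm_monoid_add multiset \<Rightarrow> bool" where
  "minimal_zero_sum S \<longleftrightarrow> S \<noteq> {#} \<and> zero_sum S \<and>
     (\<forall>T. T \<subseteq># S \<and> T \<noteq> {#} \<and> zero_sum T \<longrightarrow> T = S)"

definition lengths :: "'a::comm_monoid_add multiset \<Rightarrow> nat set" where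
  "lengths B = {t. \<exists>F :: 'a multiset multiset. size F = t \<and>
                     (\<forall>A \<in># F. minimal_zero_sum A) \<and> sum_mset F = B}"

definition squarefree_seq :: "'a multiset \<Rightarrow> bool" where
  "squarefree_seq S \<longleftrightarrow> (\<forall>g. count S g \<le> 1)"

definition has_disjoint_zs :: "'a::comm_monoid_add multiset \<Rightarrow> nat \<Rightarrow> bool" where
  "has_disjoint_zs S k \<longleftrightarrow> (\<exists>F :: 'a multiset multiset. size F = k \<and>
      (\<forall>A \<in># F. A \<noteq> {#} \<and> zero_sum A) \<and> sum_mset F \<subseteq># S)"

definition Davenport_k :: "('a::comm_monoid_add) itself \<Rightarrow> nat \<Rightarrow> nat" where
  "Davenport_k (_ :: 'a itself) k =
     (LEAST l. \<forall>S :: 'a multiset. size S \<ge> l \<longrightarrow> has_disjoint_zs S k)"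

definition is_subgroup :: "'a::ab_group_add set \<Rightarrow> bool" where
  "is_subgroup H \<longleftrightarrow> 0 \<in> H \<and> (\<forall>x\<in>H. \<forall>y\<in>H. x + y \<in> H) \<and> (\<forall>x\<in>H. - x \<in> H)"

definition subgroup_index2 :: "'a::{ab_group_add,finite} set \<Rightarrow> bool" where
  "subgroup_index2 H \<longleftrightarrow> is_subgroup H \<and> card (UNIV :: 'a set) = 2 * card H"

end

theory Submission
  imports Defs
begin



lemma two_cases: "(a::2) = 0 \<or> a = 1"
proof (induct a)
  case (of_int z)
  then have "z = 0 \<or> z = 1" by auto
  then show ?case by auto
qed

lemma add_self2 [simp]: "(a::2) + a = 0"
  using two_cases[of a] by auto

lemma add_self [simp]: "(x::C2_5) + x = 0"
  unfolding vec_eq_iff by (metis add_self2 vector_add_component zero_index)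

lemma add_self' [simp]: "(y::C2_5) + (x + x) = y" "(y::C2_5) + x + x = y" "x + (x + y) = (y::C2_5)"
  by (metis add_self add.assoc add.right_neutral add.left_neutral)+

lemma two_times [simp]: "2 * (x::C2_5) = 0" "x * 2 = 0"
  by (metis add_self mult_2, metis add_self mult_2_right)

lemma sum3 [simp]: "x + (y + (x + y)) = (0::C2_5)" "x + (y + (y + x)) = (0::C2_5)"
  by (metis add_self add.assoc, metis add_self add.assoc add.commute)

lemma minus_C [simp]: "- (x::C2_5) = x"
  by (metis add_self add.inverse_unique)

lemma diff_C [simp]: "(x::C2_5) - y = x + y"
  by (metis minus_C diff_conv_add_uminus)

lemma add_eq0_iff: "(x::C2_5) + y = 0 \<longleftrightarrow> x = y"
  by (metis add_self add_self'(3) add.right_neutral)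

lemma add_left_eq: "(x::C2_5) + y = x \<longleftrightarrow> y = 0"
  by (metis add_self'(3) add.right_neutral)

lemma add_right_eq: "(x::C2_5) + y = y \<longleftrightarrow> x = 0"
  by (metis add_self'(2) add.left_neutral)

lemma add_cancel_C: "(x::C2_5) + y = z \<longleftrightarrow> y = x + z"
  by (metis add_self'(3))

lemma swap_add: "a + h = b \<Longrightarrow> a = b + (h::C2_5)"
  by (metis add_self'(2))

lemma cardG: "card (UNIV::C2_5 set) = 32"
  by simp

section \<open>Index 2 subgroups\<close>

context
  fixes H :: "C2_5 set"
  assumes H: "subgroup_index2 H"
begin

lemma H_fin: "finite H" by simp

lemma H_card: "card H = 16"
  using H unfolding subgroup_index2_def by simp

lemma H0: "0 \<in> H"
  using H unfolding subgroup_index2_def is_subgroup_def by simp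

lemma H_add: "x \<in> H \<Longrightarrow> y \<in> H \<Longrightarrow> x + y \<in> H"
  using H unfolding subgroup_index2_def is_subgroup_def by simp

lemma H_add_in_out: "x \<in> H \<Longrightarrow> y \<notin> H \<Longrightarrow> x + y \<notin> H"
  by (metis H_add add_self'(3))

lemma H_add_out_in: "x \<notin> H \<Longrightarrow> y \<in> H \<Longrightarrow> x + y \<notin> H"
  by (metis H_add_in_out add.commute)

lemma coset_card: "card (UNIV - H) = 16"
  using H_card cardG by (simp add: card_Diff_subset)

lemma H_add_out_out: assumes "x \<notin> H" "y \<notin> H" shows "x + y \<in> H"
proof -
  have inj: "inj_on ((+) x) H" by (auto simp: inj_on_def)
  have sub: "(+) x ` H \<subseteq> UNIV - H" using assms(1) H_add_in_out by (auto simp: add.commute)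
  have "card ((+) x ` H) = 16" using card_image[OF inj] H_card by simp
  then have "(+) x ` H = UNIV - H"
    using sub coset_card by (simp add: card_subset_eq)
  then obtain h where "h \<in> H" "y = x + h" using assms(2) by blast
  then show ?thesis by simp
qed

lemma H_add_iff: "x + y \<in> H \<longleftrightarrow> (x \<in> H \<longleftrightarrow> y \<in> H)"
  by (cases "x \<in> H"; cases "y \<in> H") (simp_all add: H_add H_add_in_out H_add_out_in H_add_out_out)

lemma sum_mset_H_iff:
  "sum_mset Z \<in> H \<longleftrightarrow> even (size (filter_mset (\<lambda>g. g \<notin> H) Z))"
proof (induct Z)
  case empty then show ?case using H0 by simp
next
  case (add x Z)
  have e: "sum_mset (add_mset x Z) = x + sum_mset Z" by simp
  show ?case unfolding e by (cases "x \<in> H") (simp_all add: H_add_iff add.hyps)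
qed

lemma zero_sum_even:
  "zero_sum Z \<Longrightarrow> even (size (filter_mset (\<lambda>g. g \<notin> H) Z))"
  by (metis sum_mset_H_iff H0 zero_sum_def)

lemma set_sum_H_iff:
  "finite A \<Longrightarrow> sum id A \<in> H \<longleftrightarrow> even (card (A - H))"
proof (induct A rule: finite_induct)
  case empty then show ?case using H0 by simp
next
  case (insert x A)
  show ?case
  proof (cases "x \<in> H")
    case True
    then have "insert x A - H = A - H" by auto
    then show ?thesis using insert True by (auto simp: H_add_iff)
  next
    case False
    then have "insert x A - H = insert x (A - H)" by auto
    moreover have "card (insert x (A - H)) = Suc (card (A - H))"
      using insert by simp
    ultimately show ?thesis using insert False by (auto simp: H_add_iff)
  qed
qed

end


lemma pair_sum:
  fixes d :: C2_5
  assumes "d \<noteq> 0" "finite X" "card X = 2*n" "\<forall>x\<in>X. x + d \<in> X"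
  shows "sum id X = (if even n then 0 else d)"
  using assms(2,3,4)
proof (induct n arbitrary: X)
  case 0 then show ?case by simp
next
  case (Suc n X)
  note fin = Suc.prems(1) and c = Suc.prems(2) and cl = Suc.prems(3)
  obtain x where x: "x \<in> X" using c by fastforce
  have xd: "x + d \<in> X" using cl x by blast
  have ne: "x + d \<noteq> x" using assms(1) by (simp add: add_left_eq)
  define X' where "X' = X - {x, x + d}"
  have sub: "{x, x + d} \<subseteq> X" using x xd by blast
  have cX': "card X' = 2 * n" unfolding X'_def using c sub fin ne
    by (simp add: card_Diff_subset)
  have fX': "finite X'" unfolding X'_def using fin by simp
  have clX': "\<forall>y\<in>X'. y + d \<in> X'"
  proof
    fix y assume y: "y \<in> X'"
    then have "y + d \<in> X" using cl unfolding X'_def by blast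
    moreover have "y + d \<noteq> x"
    proof
      assume "y + d = x" then have "y = x + d" by (metis add_self'(2))
      then show False using y unfolding X'_def by blast
    qed
    moreover have "y + d \<noteq> x + d" using y unfolding X'_def by auto
    ultimately show "y + d \<in> X'" unfolding X'_def by blast
  qed
  have IH: "sum id X' = (if even n then 0 else d)"
    by (rule Suc.hyps[OF fX' cX' clX'])
  have "sum id X = sum id X' + sum id {x, x + d}"
    unfolding X'_def using sum.subset_diff[OF sub fin] by simp
  also have "sum id {x, x + d} = d" using ne by (simp add: add.assoc[symmetric])
  finally have "sum id X = sum id X' + d" .
  then show ?case using IH by (cases "even n") simp_all
qed

lemma coset_sum:
  assumes H: "subgroup_index2 H"
  shows "sum id (UNIV - H) = (0::C2_5)"
proof -
  have "card (H - {0}) = 15" using H_card[OF H] H0[OF H] by simp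
  then have "H - {0} \<noteq> {}" by (metis card.empty zero_neq_numeral)
  then obtain d where d: "d \<in> H" "d \<noteq> 0" by blast
  have cl: "\<forall>x\<in>UNIV - H. x + d \<in> UNIV - H" using H_add_out_in[OF H _ d(1)] by blast
  have c: "card (UNIV - H) = 2 * 8" using coset_card[OF H] by simp
  show ?thesis using pair_sum[OF d(2) _ c cl] by simp
qed




abbreviation dz where "dz \<equiv> has_disjoint_zs"

lemma dz_zero: "dz S 0"
  unfolding has_disjoint_zs_def by (rule exI[of _ "{#}"]) simp

lemma dz_step:
  assumes "A \<subseteq># S" "A \<noteq> {#}" "zero_sum A" "dz (S - A) k"
  shows "dz S (Suc k)"
proof -
  obtain F where F: "size F = k" "\<forall>A\<in>#F. A \<noteq> {#} \<and> zero_sum A" "sum_mset F \<subseteq># S - A"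
    using assms(4) unfolding has_disjoint_zs_def by blast
  have "A + sum_mset F \<subseteq># A + (S - A)" using F(3) by simp
  then have "sum_mset (add_mset A F) \<subseteq># S"
    using assms(1) by (simp add: subset_mset.add_diff_inverse)
  then show ?thesis unfolding has_disjoint_zs_def
    using F assms by (intro exI[of _ "add_mset A F"]) auto
qed

lemma dz_mono: assumes "S \<subseteq># S'" "dz S k" shows "dz S' k"
proof -
  obtain F where F: "size F = k" "\<forall>A\<in>#F. A \<noteq> {#} \<and> zero_sum A" "sum_mset F \<subseteq># S"
    using assms(2) unfolding has_disjoint_zs_def by blast
  have "sum_mset F \<subseteq># S'" using subset_mset.order_trans[OF F(3) assms(1)] .
  then show ?thesis unfolding has_disjoint_zs_def using F by blast
qed

lemma msub_size: "n \<le> size M \<Longrightarrow> \<exists>N. N \<subseteq># M \<and> size N = n"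
proof (induct M arbitrary: n)
  case empty then show ?case by simp
next
  case (add x M)
  show ?case
  proof (cases "n \<le> size M")
    case True
    then obtain N where N: "N \<subseteq># M" "size N = n" using add by blast
    have "M \<subseteq># add_mset x M" by simp
    then have "N \<subseteq># add_mset x M" using subset_mset.order_trans[OF N(1)] by blast
    then show ?thesis using N(2) by blast
  next
    case False
    then have "n = size (add_mset x M)" using add by simp
    then show ?thesis by blast
  qed
qed

lemma dz_le: assumes "dz S k" "j \<le> k" shows "dz S j"
proof -
  obtain F where F: "size F = k" "\<forall>A\<in>#F. A \<noteq> {#} \<and> zero_sum A" "sum_mset F \<subseteq># S"
    using assms(1) unfolding has_disjoint_zs_def by blast
  obtain F' where F': "F' \<subseteq># F" "size F' = j" using msub_size[of j F] F(1) assms(2) by auto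
  obtain D where D: "F = F' + D" using F'(1) by (metis subset_mset.le_iff_add)
  have "sum_mset F' \<subseteq># sum_mset F" unfolding D by simp
  then have s: "sum_mset F' \<subseteq># S" using F(3) by (rule subset_mset.order_trans)
  have a: "\<forall>A\<in>#F'. A \<noteq> {#} \<and> zero_sum A" using F(2) F'(1) by (meson mset_subset_eqD)
  show ?thesis unfolding has_disjoint_zs_def using F'(2) s a by blast
qed

lemma size_sum_mset_ge: "\<forall>A\<in>#F. A \<noteq> {#} \<Longrightarrow> size F \<le> size (sum_mset F)"
proof (induct F)
  case empty then show ?case by simp
next
  case (add A F)
  then have "size A \<ge> 1" by (simp add: Suc_leI nonempty_has_size)
  then show ?case using add by simp
qed

lemma dz_size: assumes "dz S k" shows "k \<le> size S"
proof -
  obtain F where F: "size F = k" "\<forall>A\<in>#F. A \<noteq> {#} \<and> zero_sum A" "sum_mset F \<subseteq># S"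
    using assms unfolding has_disjoint_zs_def by blast
  have "size F \<le> size (sum_mset F)" using F(2) size_sum_mset_ge by blast
  also have "\<dots> \<le> size S" using F(3) by (rule size_mset_mono)
  finally show ?thesis using F(1) by simp
qed

lemma zs_sum_mset: "\<forall>A\<in>#F. zero_sum A \<Longrightarrow> zero_sum (sum_mset F)"
proof (induct F)
  case empty then show ?case by (simp add: zero_sum_def)
next
  case (add A F) then show ?case by (simp add: zero_sum_def)
qed

lemma zs_diff: assumes "zero_sum B" "A \<subseteq># B" "zero_sum A" shows "zero_sum (B - (A :: C2_5 multiset))"
proof -
  have "B = A + (B - A)" using assms(2) by simp
  then have "sum_mset B = sum_mset A + sum_mset (B - A)" by (metis sum_mset.union)
  then show ?thesis using assms(1,3) unfolding zero_sum_def by simp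
qed

lemma dz_extend:
  assumes B: "zero_sum (B :: C2_5 multiset)" and g: "g \<in># B" and d: "dz (B - {#g#}) k"
  shows "dz B (Suc k)"
proof -
  obtain F where F: "size F = k" "\<forall>A\<in>#F. A \<noteq> {#} \<and> zero_sum A" "sum_mset F \<subseteq># B - {#g#}"
    using d unfolding has_disjoint_zs_def by blast
  define R where "R = B - sum_mset F"
  have sub: "sum_mset F \<subseteq># B" using F(3) by (meson diff_subset_eq_self subset_mset.order_trans)
  have zR: "zero_sum R" unfolding R_def
    using zs_diff[OF B sub] zs_sum_mset F(2) by blast
  have c1: "count (sum_mset F) g \<le> count (B - {#g#}) g" using F(3) by (rule mset_subset_eq_count)
  have c2: "count (B - {#g#}) g < count B g" using g by simp
  have "g \<in># R" unfolding R_def in_diff_count using c1 c2 by linarith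
  then have "R \<noteq> {#}" by auto
  have "sum_mset (add_mset R F) = B" unfolding R_def using sub by simp
  then show ?thesis unfolding has_disjoint_zs_def using F zR \<open>R \<noteq> {#}\<close>
    by (intro exI[of _ "add_mset R F"]) auto
qed

lemma sqf_mset_set: "squarefree_seq (mset_set F)"
  unfolding squarefree_seq_def by (simp add: count_mset_set')

lemma sqf_eq: assumes "squarefree_seq B" shows "mset_set (set_mset B) = B"
proof (rule multiset_eqI)
  fix x
  have "count B x \<le> 1" using assms unfolding squarefree_seq_def by blast
  then show "count (mset_set (set_mset B)) x = count B x"
    by (cases "count B x = 0") (auto simp: count_mset_set' count_eq_zero_iff intro: le_antisym)
qed

lemma zs_mset_set: "finite F \<Longrightarrow> zero_sum (mset_set F) \<longleftrightarrow> sum id F = 0"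
  unfolding zero_sum_def by (simp add: sum_unfold_sum_mset)

lemma dz_set_step:
  assumes "finite S" "F \<subseteq> S" "F \<noteq> {}" "sum id F = (0::C2_5)" "dz (mset_set (S - F)) k"
  shows "dz (mset_set S) (Suc k)"
proof -
  have fF: "finite F" using assms(1,2) finite_subset by blast
  show ?thesis
  proof (rule dz_step[of "mset_set F"])
    show "mset_set F \<subseteq># mset_set S" using assms(1,2) fF by simp
    show "mset_set F \<noteq> {#}" using assms(3) fF by (simp add: mset_set_empty_iff)
    show "zero_sum (mset_set F)" using assms(4) fF by (simp add: zs_mset_set)
    show "dz (mset_set S - mset_set F) k" using assms(5) mset_set_Diff[OF assms(1,2)] by simp
  qed
qed

lemma dz_set_mono: assumes "finite S" "T \<subseteq> S" "dz (mset_set T) k" shows "dz (mset_set S) k"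
proof -
  have "finite T" using assms(1,2) finite_subset by blast
  then have "mset_set T \<subseteq># mset_set S" using assms by simp
  then show ?thesis using assms(3) dz_mono by blast
qed




section \<open>Characters\<close>

definition dotp :: "C2_5 \<Rightarrow> C2_5 \<Rightarrow> 2" where
  "dotp c x = (\<Sum>i\<in>UNIV. c$i * x$i)"

definition chi :: "C2_5 \<Rightarrow> C2_5 \<Rightarrow> int" where
  "chi c x = (if dotp c x = 0 then 1 else -1)"

lemma dotp_add: "dotp c (x + y) = dotp c x + dotp c y"
  unfolding dotp_def by (simp add: distrib_left sum.distrib)

lemma dotp_comm: "dotp c x = dotp x c"
  unfolding dotp_def by (simp add: mult.commute)

lemma dotp_0 [simp]: "dotp c 0 = 0" "dotp 0 x = 0"
  unfolding dotp_def by simp_all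

lemma one_ne_zero2 [simp]: "(1::2) \<noteq> 0" by simp

lemma chi_add: "chi c (x + y) = chi c x * chi c y"
  unfolding chi_def dotp_add
  using two_cases[of "dotp c x"] two_cases[of "dotp c y"] by auto

lemma dotp_axis: "dotp (axis i 1) x = x $ i"
proof -
  have "\<And>j. (axis i (1::2)) $ j * x $ j = (if i = j then x $ j else 0)" by (simp add: axis_def)
  then show ?thesis unfolding dotp_def by simp
qed

lemma nonzero_comp: assumes "(x::C2_5) \<noteq> 0" obtains i where "x $ i = 1"
proof -
  obtain i where "x $ i \<noteq> 0" using assms by (auto simp: vec_eq_iff)
  then have "x $ i = 1" using two_cases[of "x $ i"] by auto
  then show ?thesis using that by blast
qed

lemma exists_dot1: assumes "(c::C2_5) \<noteq> 0" obtains e where "dotp c e = 1"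
proof -
  obtain i where "c $ i = 1" using nonzero_comp[OF assms] by blast
  then have "dotp c (axis i 1) = 1" by (subst dotp_comm) (simp add: dotp_axis)
  then show ?thesis using that by blast
qed

lemma chi_sum: "(\<Sum>c\<in>UNIV. chi c x) = (if x = 0 then 32 else 0)"
proof (cases "x = 0")
  case True
  then show ?thesis by (simp add: chi_def)
next
  case False
  obtain e where e: "dotp x e = 1" using exists_dot1[OF False] by blast
  have flip: "chi (c + e) x = - chi c x" for c
  proof -
    have "dotp (c + e) x = dotp x c + dotp x e" by (subst dotp_comm) (simp add: dotp_add)
    then have "dotp (c + e) x = dotp c x + 1" using e by (simp add: dotp_comm[of x c])
    then show ?thesis unfolding chi_def using two_cases[of "dotp c x"] by auto
  qed
  have "(\<Sum>c\<in>UNIV. chi (c + e) x) = (\<Sum>c\<in>UNIV. chi c x)"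
    by (rule sum.reindex_bij_witness[where i="\<lambda>c. c + e" and j="\<lambda>c. c + e"]) auto
  then have "(\<Sum>c\<in>UNIV. chi c x) = - (\<Sum>c\<in>UNIV. chi c x)"
    by (simp add: flip sum_negf)
  then show ?thesis using False by simp
qed

definition sumfree :: "C2_5 set \<Rightarrow> bool" where
  "sumfree S \<longleftrightarrow> 0 \<notin> S \<and> (\<forall>x\<in>S. \<forall>y\<in>S. x \<noteq> y \<longrightarrow> x + y \<notin> S)"

definition fh :: "C2_5 set \<Rightarrow> C2_5 \<Rightarrow> int" where
  "fh S c = (\<Sum>x\<in>S. chi c x)"

lemma fh_sq: "(\<Sum>c\<in>UNIV. (fh S c)^2) = 32 * int (card S)"
proof -
  have "(\<Sum>c\<in>UNIV. (fh S c)^2) = (\<Sum>c\<in>UNIV. \<Sum>x\<in>S. \<Sum>y\<in>S. chi c (x + y))"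
    unfolding fh_def power2_eq_square sum_product chi_add ..
  also have "\<dots> = (\<Sum>x\<in>S. \<Sum>y\<in>S. \<Sum>c\<in>UNIV. chi c (x + y))"
    by (simp add: sum.swap[of _ UNIV] sum.swap[of _ UNIV S])
  also have "\<dots> = (\<Sum>x\<in>S. \<Sum>y\<in>S. if x = y then 32 else 0)"
    unfolding chi_sum by (simp add: add_eq0_iff)
  also have "\<dots> = (\<Sum>x\<in>S. 32)" by simp
  finally show ?thesis by simp
qed

lemma fh_cube: assumes "sumfree S" shows "(\<Sum>c\<in>UNIV. (fh S c)^3) = 0"
proof -
  have e: "(fh S c)^3 = (\<Sum>x\<in>S. \<Sum>y\<in>S. \<Sum>z\<in>S. chi c (z + y + x))" for c
    unfolding fh_def power3_eq_cube chi_add by (simp only: sum_distrib_left sum_distrib_right)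
  have "(\<Sum>c\<in>UNIV. (fh S c)^3) = (\<Sum>c\<in>UNIV. \<Sum>x\<in>S. \<Sum>y\<in>S. \<Sum>z\<in>S. chi c (z + y + x))"
    unfolding e ..
  also have "\<dots> = (\<Sum>x\<in>S. \<Sum>y\<in>S. \<Sum>z\<in>S. \<Sum>c\<in>UNIV. chi c (z + y + x))"
    by (simp add: sum.swap[of _ UNIV])
  also have "\<dots> = (\<Sum>x\<in>S. \<Sum>y\<in>S. \<Sum>z\<in>S. 0)"
  proof (intro sum.cong refl)
    fix x y z assume xyz: "x \<in> S" "y \<in> S" "z \<in> S"
    have "x + y + z \<noteq> 0"
    proof
      assume "x + y + z = 0"
      then have z: "z = x + y" by (simp add: add_eq0_iff)
      show False
      proof (cases "x = y")
        case True then show False using xyz z assms unfolding sumfree_def by simp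
      next
        case False then show False using xyz z assms unfolding sumfree_def by blast
      qed
    qed
    then have "z + y + x \<noteq> 0" by (simp add: ac_simps)
    then show "(\<Sum>c\<in>UNIV. chi c (z + y + x)) = 0" unfolding chi_sum by simp
  qed
  finally show ?thesis by simp
qed


definition Hc :: "C2_5 \<Rightarrow> C2_5 set" where
  "Hc c = {x. dotp c x = 0}"

lemma Hc_index2: assumes "c \<noteq> 0" shows "subgroup_index2 (Hc c)"
proof -
  obtain e where e: "dotp c e = 1" using exists_dot1[OF assms] by blast
  have sg: "is_subgroup (Hc c)" unfolding is_subgroup_def Hc_def by (simp add: dotp_add)
  have img: "(\<lambda>x. x + e) ` Hc c = UNIV - Hc c"
  proof
    show "(\<lambda>x. x + e) ` Hc c \<subseteq> UNIV - Hc c" using e by (auto simp: Hc_def dotp_add)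
    show "UNIV - Hc c \<subseteq> (\<lambda>x. x + e) ` Hc c"
    proof
      fix y assume y: "y \<in> UNIV - Hc c"
      then have "dotp c y = 1" unfolding Hc_def using two_cases[of "dotp c y"] by auto
      then have "y + e \<in> Hc c" using e by (simp add: Hc_def dotp_add)
      moreover have "y = (y + e) + e" by simp
      ultimately show "y \<in> (\<lambda>x. x + e) ` Hc c" by blast
    qed
  qed
  have inj: "inj_on (\<lambda>x. x + e) (Hc c)" by (auto simp: inj_on_def)
  have "card (UNIV - Hc c) = card (Hc c)" using card_image[OF inj] img by simp
  moreover have "card (UNIV - Hc c) + card (Hc c) = 32"
  proof -
    have "card (Hc c) \<le> 32" using card_mono[of UNIV "Hc c"] cardG by simp
    then show ?thesis using card_Diff_subset[of "Hc c" UNIV] cardG by simp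
  qed
  ultimately have "card (Hc c) = 16" by simp
  then show ?thesis unfolding subgroup_index2_def using sg cardG by simp
qed

lemma fh_split: "fh S c = int (card (S \<inter> Hc c)) - int (card (S - Hc c))"
proof -
  have "fh S c = sum (chi c) (S \<inter> Hc c) + sum (chi c) (S - Hc c)"
    unfolding fh_def by (rule sum.Int_Diff) simp
  also have "sum (chi c) (S \<inter> Hc c) = (\<Sum>x\<in>S \<inter> Hc c. 1)"
    by (rule sum.cong) (auto simp: chi_def Hc_def)
  also have "sum (chi c) (S - Hc c) = (\<Sum>x\<in>S - Hc c. -1)"
    by (rule sum.cong) (auto simp: chi_def Hc_def)
  finally show ?thesis by simp
qed

lemma fh0: "fh S 0 = int (card S)"
  unfolding fh_def chi_def by simp

lemma int_ineq: assumes "(s::int) \<ge> 1" shows "- (s^3) - (6 - s) * (32 * s - s^2) < 0"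
proof -
  define X where "X = 2 * (s * s) - 38 * s + 192"
  define Q where "Q = (4 * s - 38) * (4 * s - 38)"
  have "8 * X = Q + 92" unfolding X_def Q_def by (simp add: algebra_simps)
  moreover have "Q \<ge> 0" unfolding Q_def by simp
  ultimately have "8 * X > 0" by linarith
  then have p: "2 * (s * s) - 38 * s + 192 > 0" unfolding X_def by simp
  have "- (s^3) - (6 - s) * (32 * s - s^2) = - (s * (2 * (s * s) - 38 * s + 192))"
    by (simp add: power2_eq_square power3_eq_cube algebra_simps)
  moreover have "s * (2 * (s * s) - 38 * s + 192) > 0" using p assms by simp
  ultimately show ?thesis by linarith
qed

lemma fourier:
  assumes sf: "sumfree S" and ne: "S \<noteq> {}"
  shows "\<exists>c. c \<noteq> 0 \<and> card (S \<inter> Hc c) \<le> 2"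
proof (rule ccontr)
  assume "\<not> ?thesis"
  then have big: "\<And>c. c \<noteq> 0 \<Longrightarrow> card (S \<inter> Hc c) \<ge> 3" by force
  define s where "s = int (card S)"
  have s1: "s \<ge> 1" using ne unfolding s_def by (simp add: Suc_leI card_gt_0_iff)
  define m where "m = 6 - s"
  have fm: "fh S c \<ge> m" if "c \<noteq> 0" for c
  proof -
    have "card (S \<inter> Hc c) + card (S - Hc c) = card S"
      by (metis card_Int_Diff finite)
    then show ?thesis using big[OF that] unfolding fh_split m_def s_def by linarith
  qed
  have nn: "(fh S c)^3 - m * (fh S c)^2 \<ge> 0" if "c \<noteq> 0" for c
  proof -
    have "(fh S c)^3 - m * (fh S c)^2 = (fh S c)^2 * (fh S c - m)"
      by (simp add: power2_eq_square power3_eq_cube algebra_simps)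
    moreover have "(fh S c)^2 * (fh S c - m) \<ge> 0" using fm[OF that] by simp
    ultimately show ?thesis by simp
  qed
  have sumnn: "(\<Sum>c\<in>UNIV - {0}. (fh S c)^3 - m * (fh S c)^2) \<ge> 0"
    by (rule sum_nonneg) (use nn in auto)
  have split: "(\<Sum>c\<in>UNIV. g c) = g 0 + (\<Sum>c\<in>UNIV - {0}. g c)" for g :: "C2_5 \<Rightarrow> int"
    by (rule sum.remove) auto
  have "(\<Sum>c\<in>UNIV - {0}. (fh S c)^3 - m * (fh S c)^2)
      = (\<Sum>c\<in>UNIV - {0}. (fh S c)^3) - m * (\<Sum>c\<in>UNIV - {0}. (fh S c)^2)"
    by (simp add: sum_subtractf sum_distrib_left)
  also have "(\<Sum>c\<in>UNIV - {0}. (fh S c)^3) = - (s^3)"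
    using split[of "\<lambda>c. (fh S c)^3"] fh_cube[OF sf] fh0 unfolding s_def by simp
  also have "(\<Sum>c\<in>UNIV - {0}. (fh S c)^2) = 32 * s - s^2"
    using split[of "\<lambda>c. (fh S c)^2"] fh_sq[of S] fh0 unfolding s_def by simp
  finally have "- (s^3) - (6 - s) * (32 * s - s^2) \<ge> 0" using sumnn unfolding m_def by simp
  then show False using int_ineq[OF s1] by simp
qed




definition short :: "C2_5 multiset \<Rightarrow> bool" where
  "short B \<longleftrightarrow> (\<exists>A. A \<subseteq># B \<and> A \<noteq> {#} \<and> zero_sum A \<and> size A \<le> 3)"

lemma short2:
  fixes B :: "C2_5 multiset"
  assumes "0 \<in># B \<or> \<not> squarefree_seq B"
  shows "\<exists>A. A \<subseteq># B \<and> A \<noteq> {#} \<and> zero_sum A \<and> size A \<le> 2"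
proof (cases "0 \<in># B")
  case True
  then show ?thesis by (intro exI[of _ "{#0#}"]) (auto simp: zero_sum_def)
next
  case False
  from assms False have "\<exists>g. \<not> count B g \<le> 1" unfolding squarefree_seq_def by blast
  then obtain g where "\<not> count B g \<le> 1" by blast
  then have g: "count B g \<ge> 2" by simp
  have "{#g, g#} \<subseteq># B" using g by (simp add: subseteq_mset_def)
  then show ?thesis by (intro exI[of _ "{#g, g#}"]) (auto simp: zero_sum_def)
qed

lemma not_short:
  assumes "\<not> short B"
  shows "squarefree_seq B \<and> 0 \<notin># B \<and> sumfree (set_mset B)"
proof -
  have a: "squarefree_seq B \<and> 0 \<notin># B"
    using short2[of B] assms unfolding short_def by fastforce
  have "sumfree (set_mset B)"
  proof (rule ccontr)
    assume "\<not> sumfree (set_mset B)"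
    then obtain x y where xy: "x \<in># B" "y \<in># B" "x \<noteq> y" "x + y \<in># B"
      using a unfolding sumfree_def by blast
    have x0: "x \<noteq> 0" "y \<noteq> 0" using a xy by auto
    have d: "x + y \<noteq> x" "x + y \<noteq> y" using x0 by (auto simp: add_left_eq add_right_eq)
    define F where "F = {x, y, x + y}"
    have "mset_set F \<subseteq># B"
    proof -
      have "mset_set F \<subseteq># mset_set (set_mset B)" unfolding F_def using xy by simp
      moreover have e: "mset_set (set_mset B) = B" using sqf_eq a by blast
      ultimately show ?thesis by simp
    qed
    moreover have "mset_set F \<noteq> {#}" unfolding F_def by (simp add: mset_set_empty_iff)
    moreover have "zero_sum (mset_set F)" unfolding F_def using xy d
      by (simp add: zero_sum_def)
    moreover have "size (mset_set F) \<le> 3" unfolding F_def by (simp add: card_insert_le_m1)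
    ultimately show False using assms unfolding short_def by blast
  qed
  then show ?thesis using a by blast
qed

lemma short_step:
  assumes "short B" "dz (B - A) k \<Longrightarrow> True"
  shows "\<exists>A. A \<subseteq># B \<and> A \<noteq> {#} \<and> zero_sum A \<and> size A \<le> 3 \<and> size (B - A) \<ge> size B - 3"
proof -
  obtain A where A: "A \<subseteq># B" "A \<noteq> {#}" "zero_sum A" "size A \<le> 3" using assms(1) unfolding short_def by blast
  have "size (B - A) = size B - size A" using A(1) by (simp add: size_Diff_submset)
  then show ?thesis using A by (intro exI[of _ A]) auto
qed

section \<open>Sum-free sets\<close>

lemma sf_H_elem:
  assumes sf: "sumfree S" and H: "subgroup_index2 H" and h: "h \<in> S" "h \<in> H"
  shows "card (S - H) \<le> 8"
proof -
  define X where "X = S - H"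
  have inj: "inj_on (\<lambda>x. x + h) X" by (auto simp: inj_on_def)
  have sub1: "X \<subseteq> UNIV - H" unfolding X_def by blast
  have sub2: "(\<lambda>x. x + h) ` X \<subseteq> UNIV - H" unfolding X_def using H_add_out_in[OF H _ h(2)] by blast
  have disj: "X \<inter> (\<lambda>x. x + h) ` X = {}"
  proof (rule ccontr)
    assume "X \<inter> (\<lambda>x. x + h) ` X \<noteq> {}"
    then obtain x where x: "x \<in> X" "x + h \<in> X" by blast
    have "x \<noteq> h" using x h unfolding X_def by blast
    then show False using sf x h unfolding sumfree_def X_def by blast
  qed
  have "card (X \<union> (\<lambda>x. x + h) ` X) \<le> 16"
    using card_mono[of "UNIV - H" "X \<union> (\<lambda>x. x + h) ` X"] sub1 sub2 coset_card[OF H] by simp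
  moreover have "card (X \<union> (\<lambda>x. x + h) ` X) = card X + card X"
    using card_Un_disjoint[OF _ _ disj] card_image[OF inj] by simp
  ultimately show ?thesis unfolding X_def by simp
qed

lemma sf_coset:
  assumes sf: "sumfree S" and c: "card S \<ge> 11"
  shows "\<exists>H. subgroup_index2 H \<and> S \<subseteq> UNIV - H"
proof -
  have "S \<noteq> {}" using c by auto
  then obtain c where c0: "c \<noteq> 0" and c2: "card (S \<inter> Hc c) \<le> 2" using fourier[OF sf] by blast
  define H where "H = Hc c"
  have H: "subgroup_index2 H" unfolding H_def using Hc_index2[OF c0] .
  have "card (S \<inter> H) + card (S - H) = card S" by (metis card_Int_Diff finite)
  then have big: "card (S - H) \<ge> 9" using c c2 unfolding H_def by linarith
  have "S \<inter> H = {}"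
  proof (rule ccontr)
    assume "S \<inter> H \<noteq> {}"
    then obtain h where "h \<in> S" "h \<in> H" by blast
    then show False using sf_H_elem[OF sf H] big by fastforce
  qed
  then show ?thesis using H by blast
qed

lemma coset_card_le: fixes H :: "C2_5 set" assumes "subgroup_index2 H" "S \<subseteq> UNIV - H" shows "card S \<le> 16"
proof -
  have "card S \<le> card (UNIV - H)" by (rule card_mono) (use assms in auto)
  then show ?thesis using coset_card[OF assms(1)] by simp
qed

lemma quad:
  assumes z: "(0::C2_5) \<notin> S" and c: "card S \<ge> 9"
  shows "\<exists>F \<subseteq> S. card F = 4 \<and> sum id F = 0"
proof -
  define P where "P = {F. F \<subseteq> S \<and> card F = 2}"
  have cP: "card P = card S choose 2" unfolding P_def by (rule n_subsets) simp
  have "card S * (card S - 1) \<ge> 9 * 8" using c by (intro mult_mono) auto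
  then have "card P \<ge> 36" unfolding cP choose_two by simp
  have img: "(\<lambda>F. sum id F) ` P \<subseteq> UNIV - {0}"
  proof
    fix s assume "s \<in> (\<lambda>F. sum id F) ` P"
    then obtain F where F: "F \<in> P" "s = sum id F" by blast
    then obtain a b where ab: "F = {a, b}" "a \<noteq> b" unfolding P_def by (auto simp: card_2_iff)
    then show "s \<in> UNIV - {0}" using F by (simp add: add_eq0_iff)
  qed
  have c31: "card (UNIV - {0::C2_5}) = 31" using cardG by simp
  have "\<not> inj_on (\<lambda>F. sum id F) P"
  proof
    assume "inj_on (\<lambda>F. sum id F) P"
    then have "card P \<le> 31" using card_inj_on_le[OF _ img] c31 by simp
    then show False using \<open>card P \<ge> 36\<close> by simp
  qed
  then obtain F1 F2 where F: "F1 \<in> P" "F2 \<in> P" "F1 \<noteq> F2" "sum id F1 = sum id F2"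
    unfolding inj_on_def by blast
  obtain a b where ab: "F1 = {a, b}" "a \<noteq> b" using F(1) unfolding P_def by (auto simp: card_2_iff)
  obtain c d where cd: "F2 = {c, d}" "c \<noteq> d" using F(2) unfolding P_def by (auto simp: card_2_iff)
  have s: "a + b = c + d" using F(4) ab cd by simp
  have disj: "F1 \<inter> F2 = {}"
  proof (rule ccontr)
    assume "F1 \<inter> F2 \<noteq> {}"
    then have "a = c \<or> a = d \<or> b = c \<or> b = d" unfolding ab cd by blast
    then have "F1 = F2"
    proof (elim disjE)
      assume e: "a = c" then have "b = d" using s by simp
      then show ?thesis using e ab cd by simp
    next
      assume e: "a = d" then have "b = c" using s by (metis add.commute add_left_cancel)
      then show ?thesis using e ab cd by (simp add: insert_commute)
    next
      assume e: "b = c" then have "a = d" using s by (metis add.commute add_left_cancel)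
      then show ?thesis using e ab cd by (simp add: insert_commute)
    next
      assume e: "b = d" then have "a = c" using s by (metis add_right_cancel)
      then show ?thesis using e ab cd by simp
    qed
    then show False using F(3) by simp
  qed
  have "card (F1 \<union> F2) = 4" using card_Un_disjoint[OF _ _ disj] ab cd by simp
  moreover have "sum id (F1 \<union> F2) = 0" using sum.union_disjoint[OF _ _ disj, of id] F(4) by simp
  moreover have "F1 \<union> F2 \<subseteq> S" using F(1,2) unfolding P_def by blast
  ultimately show ?thesis by blast
qed

lemma six:
  assumes c: "card S \<ge> 6"
  shows "\<exists>F \<subseteq> S. F \<noteq> {} \<and> sum id F = (0::C2_5) \<and> card F \<le> 6"
proof -
  obtain T where T: "T \<subseteq> S" "card T = 6" "finite T" using obtain_subset_with_card_n[OF c] by blast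
  have img: "(\<lambda>A. sum id A) ` Pow T \<subseteq> (UNIV :: C2_5 set)" by simp
  have "\<not> inj_on (\<lambda>A. sum id A) (Pow T)"
  proof
    assume "inj_on (\<lambda>A. sum id A) (Pow T)"
    then have "card (Pow T) \<le> 32" using card_inj_on_le[OF _ img] cardG by simp
    then show False using card_Pow[OF T(3)] T(2) by simp
  qed
  then obtain A1 A2 where A: "A1 \<subseteq> T" "A2 \<subseteq> T" "A1 \<noteq> A2" "sum id A1 = sum id A2"
    unfolding inj_on_def by blast
  have f1: "finite A1" "finite A2" using A(1,2) T(3) finite_subset by auto
  define F where "F = (A1 - A2) \<union> (A2 - A1)"
  have s1: "sum id A1 = sum id (A1 - A2) + sum id (A1 \<inter> A2)"
    using sum.Int_Diff[OF f1(1), of id A2] by (simp add: add.commute)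
  have s2: "sum id A2 = sum id (A2 - A1) + sum id (A1 \<inter> A2)"
    using sum.Int_Diff[OF f1(2), of id A1] by (simp add: add.commute Int_commute)
  have "sum id F = sum id (A1 - A2) + sum id (A2 - A1)"
    unfolding F_def by (rule sum.union_disjoint) (use f1 in auto)
  also have "\<dots> = sum id A1 + sum id A2"
    unfolding s1 s2 by (simp add: ac_simps)
  also have "\<dots> = 0" using A(4) by simp
  finally have "sum id F = 0" .
  moreover have "F \<noteq> {}" unfolding F_def using A(3) by blast
  moreover have "F \<subseteq> S" unfolding F_def using A(1,2) T(1) by blast
  moreover have "card F \<le> 6" using card_mono[OF T(3), of F] A(1,2) T(2) unfolding F_def by auto
  ultimately show ?thesis by blast
qed

lemma hpairs:
  assumes h: "(h::C2_5) \<noteq> 0"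
  shows "finite Y \<Longrightarrow> \<forall>y\<in>Y. y + h \<in> Y \<Longrightarrow> card Y \<ge> 4 * j \<Longrightarrow> dz (mset_set Y) j"
proof (induct j arbitrary: Y)
  case 0 show ?case by (rule dz_zero)
next
  case (Suc j Y)
  then obtain u where u: "u \<in> Y" by fastforce
  have uh: "u + h \<in> Y" "u + h \<noteq> u" using Suc.prems u h by (auto simp: add_left_eq)
  have "card (Y - {u, u + h}) \<ge> 2" using Suc.prems uh u by (simp add: card_Diff_subset)
  then have "Y - {u, u + h} \<noteq> {}" by (metis card.empty not_numeral_le_zero)
  then obtain w where w: "w \<in> Y" "w \<noteq> u" "w \<noteq> u + h" by blast
  have wh1: "w + h \<in> Y" using Suc.prems w by blast
  have wh2: "w + h \<noteq> w" using h by (simp add: add_left_eq)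
  have wh3: "w + h \<noteq> u" using w(3) swap_add[of w h u] by blast
  have wh4: "w + h \<noteq> u + h" using w(2) by simp
  note wh = wh1 wh2 wh3 wh4
  define Q where "Q = {u, u + h, w, w + h}"
  have cQ: "card Q = 4" unfolding Q_def using uh wh w by auto
  have QY: "Q \<subseteq> Y" unfolding Q_def using u uh wh w by blast
  have sQ: "sum id Q = 0" unfolding Q_def using uh wh w by simp
  define Y' where "Y' = Y - Q"
  have fY': "finite Y'" unfolding Y'_def using Suc.prems by simp
  have cY': "card Y' \<ge> 4 * j" unfolding Y'_def using Suc.prems cQ QY by (simp add: card_Diff_subset)
  have clY': "\<forall>y\<in>Y'. y + h \<in> Y'"
  proof
    fix y assume y: "y \<in> Y'"
    have "y + h \<notin> Q"
    proof
      assume "y + h \<in> Q"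
      then have "y \<in> Q" unfolding Q_def using swap_add[of y h u] swap_add[of y h w] by auto
      then show False using y unfolding Y'_def by blast
    qed
    then show "y + h \<in> Y'" using y Suc.prems unfolding Y'_def by blast
  qed
  have "dz (mset_set Y') j" using Suc.hyps[OF fY' clY' cY'] .
  then show ?case using dz_set_step[OF Suc.prems(1) QY _ sQ] cQ unfolding Y'_def by force
qed




lemma H_nonzero: fixes H :: "C2_5 set" assumes H: "subgroup_index2 H" obtains d where "d \<in> H" "d \<noteq> 0"
proof -
  have "card (H - {0}) = 15" using H_card[OF H] H0[OF H] by simp
  then have "H - {0} \<noteq> {}" by (metis card.empty zero_neq_numeral)
  then show ?thesis using that by blast
qed

lemma coset_full_quads: fixes H :: "C2_5 set" assumes H: "subgroup_index2 H" shows "dz (mset_set (UNIV - H)) 4"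
proof -
  obtain d where d: "d \<in> H" "d \<noteq> 0" using H_nonzero[OF H] by blast
  show ?thesis
    by (rule hpairs[OF d(2)]) (use coset_card[OF H] H_add_out_in[OF H _ d(1)] in auto)
qed

lemma coset_quads13:
  fixes H :: "C2_5 set" assumes H: "subgroup_index2 H" and S: "S \<subseteq> UNIV - H" and c: "card S \<ge> 13"
  shows "dz (mset_set S) 3"
proof -
  define M where "M = (UNIV - H) - S"
  have cM: "card M + card S = 16"
  proof -
    have "card M = card (UNIV - H) - card S" unfolding M_def using S by (simp add: card_Diff_subset)
    moreover have "card S \<le> 16" using coset_card_le[OF H S] .
    ultimately show ?thesis using coset_card[OF H] by simp
  qed
  have "\<exists>d. d \<in> H \<and> d \<noteq> 0 \<and> card {x\<in>S. x + d \<notin> S} \<le> 1"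
  proof (cases "card M \<ge> 2")
    case True
    have "M \<noteq> {}" using True by (metis card.empty not_numeral_le_zero)
    then obtain m1 where m1: "m1 \<in> M" by blast
    have "card (M - {m1}) \<ge> 1" using True m1 by (simp add: card_Diff_singleton)
    then have "M - {m1} \<noteq> {}" by (metis card.empty not_one_le_zero)
    then obtain m2 where "m2 \<in> M - {m1}" by blast
    then have m: "m1 \<in> M" "m2 \<in> M" "m1 \<noteq> m2" using m1 by auto
    define d where "d = m1 + m2"
    have dH: "d \<in> H" unfolding d_def using m H_add_out_out[OF H] unfolding M_def by blast
    have d0: "d \<noteq> 0" unfolding d_def using m by (simp add: add_eq0_iff)
    have sub: "{x\<in>S. x + d \<notin> S} \<subseteq> (\<lambda>m. m + d) ` (M - {m1, m2})"
    proof
      fix x assume x: "x \<in> {x\<in>S. x + d \<notin> S}"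
      have xd: "x + d \<in> M" unfolding M_def using x S H_add_out_in[OF H _ dH] by blast
      have n1: "x + d \<noteq> m1"
      proof
        assume "x + d = m1" then have "x = m1 + d" by (rule swap_add)
        then have "x = m2" unfolding d_def by simp
        then show False using x m unfolding M_def by blast
      qed
      have n2: "x + d \<noteq> m2"
      proof
        assume "x + d = m2" then have "x = m2 + d" by (rule swap_add)
        then have "x = m1" unfolding d_def by (simp add: add.left_commute)
        then show False using x m unfolding M_def by blast
      qed
      have "x = (x + d) + d" by simp
      then show "x \<in> (\<lambda>m. m + d) ` (M - {m1, m2})" using xd n1 n2 by blast
    qed
    have "card {x\<in>S. x + d \<notin> S} \<le> card (M - {m1, m2})"
      using card_mono[OF _ sub] card_image_le[of "M - {m1, m2}" "\<lambda>m. m + d"] by fastforce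
    also have "\<dots> = card M - 2" using m by (simp add: card_Diff_subset)
    also have "\<dots> \<le> 1" using cM c by simp
    finally show ?thesis using dH d0 by blast
  next
    case False
    obtain d where d: "d \<in> H" "d \<noteq> 0" using H_nonzero[OF H] by blast
    have sub: "{x\<in>S. x + d \<notin> S} \<subseteq> (\<lambda>m. m + d) ` M"
    proof
      fix x assume x: "x \<in> {x\<in>S. x + d \<notin> S}"
      have xd: "x + d \<in> M" unfolding M_def using x S H_add_out_in[OF H _ d(1)] by blast
      have "x = (x + d) + d" by simp
      then show "x \<in> (\<lambda>m. m + d) ` M" using xd by blast
    qed
    have "card {x\<in>S. x + d \<notin> S} \<le> card M"
      using card_mono[OF _ sub] card_image_le[of M "\<lambda>m. m + d"] by fastforce
    then show ?thesis using d False by auto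
  qed
  then obtain d where d: "d \<in> H" "d \<noteq> 0" and bad: "card {x\<in>S. x + d \<notin> S} \<le> 1" by blast
  define Y where "Y = {x\<in>S. x + d \<in> S}"
  have u: "Y \<union> {x\<in>S. x + d \<notin> S} = S" unfolding Y_def by blast
  have di: "Y \<inter> {x\<in>S. x + d \<notin> S} = {}" unfolding Y_def by blast
  have "card Y + card {x\<in>S. x + d \<notin> S} = card S"
    using card_Un_disjoint[OF _ _ di] u by simp
  then have cY: "card Y \<ge> 4 * 3" using bad c by linarith
  have clY: "\<forall>y\<in>Y. y + d \<in> Y" unfolding Y_def by simp
  have "dz (mset_set Y) 3" by (rule hpairs[OF d(2) _ clY cY]) simp
  moreover have "Y \<subseteq> S" unfolding Y_def by blast
  ultimately show ?thesis using dz_set_mono[of S Y 3] by simp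
qed

lemma coset_no_zs:
  fixes H :: "C2_5 set" assumes H: "subgroup_index2 H" and S: "S \<subseteq> UNIV - H" and c: "card S \<ge> 14" "card S \<le> 15"
  shows "sum id S \<noteq> 0"
proof
  assume s0: "sum id S = 0"
  define M where "M = (UNIV - H) - S"
  have cM: "card M + card S = 16"
  proof -
    have "card M = card (UNIV - H) - card S" unfolding M_def using S by (simp add: card_Diff_subset)
    moreover have "card S \<le> 16" using coset_card_le[OF H S] .
    ultimately show ?thesis using coset_card[OF H] by simp
  qed
  have "sum id (UNIV - H) = sum id M + sum id S"
    unfolding M_def using sum.subset_diff[OF S, of id] by simp
  then have sM: "sum id M = 0" using coset_sum[OF H] s0 by simp
  have MH: "M \<inter> H = {}" unfolding M_def by blast
  show False
  proof (cases "card M = 1")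
    case True
    then obtain m where "M = {m}" by (auto simp: card_1_singleton_iff)
    then show False using sM MH H0[OF H] by auto
  next
    case False
    then have "card M = 2" using cM c by linarith
    then obtain a b where "M = {a, b}" "a \<noteq> b" by (auto simp: card_2_iff)
    then show False using sM by (simp add: add_eq0_iff)
  qed
qed




section \<open>Upper bounds\<close>

lemma set_form:
  assumes "\<not> short B"
  shows "B = mset_set (set_mset B)" "size B = card (set_mset B)" "sumfree (set_mset B)"
proof -
  have a: "squarefree_seq B" "sumfree (set_mset B)" using not_short[OF assms] by auto
  show e: "B = mset_set (set_mset B)" using sqf_eq[OF a(1)] by simp
  show "size B = card (set_mset B)" by (subst e) simp
  show "sumfree (set_mset B)" by (rule a(2))
qed

lemma short_reduce:
  assumes "short B" "\<And>A. A \<subseteq># B \<Longrightarrow> size (B - A) \<ge> size B - 3 \<Longrightarrow> zero_sum A \<Longrightarrow> dz (B - A) k"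
  shows "dz B (Suc k)"
proof -
  obtain A where A: "A \<subseteq># B" "A \<noteq> {#}" "zero_sum A" "size A \<le> 3"
    using assms(1) unfolding short_def by blast
  have "size (B - A) = size B - size A" using A(1) by (simp add: size_Diff_submset)
  then have "size (B - A) \<ge> size B - 3" using A(4) by simp
  then show ?thesis using dz_step[OF A(1,2,3)] assms(2)[OF A(1) _ A(3)] by blast
qed

lemma dz1: assumes "B \<noteq> {#}" "zero_sum B" shows "dz B (Suc 0)"
  by (rule dz_step[of B]) (use assms dz_zero in auto)

lemma set_dz1: "F \<noteq> {} \<Longrightarrow> sum id F = (0::C2_5) \<Longrightarrow> dz (mset_set F) (Suc 0)"
  using dz1[of "mset_set F"] by (simp add: zs_mset_set mset_set_empty_iff)

lemma sum_diff2: "F \<subseteq> T \<Longrightarrow> sum id T = 0 \<Longrightarrow> sum id F = 0 \<Longrightarrow> sum id (T - F) = (0::C2_5)"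
  using sum.subset_diff[of F T id] by simp

lemma P1: "k \<le> 5 \<Longrightarrow> size S \<ge> 3 * k + 4 \<Longrightarrow> dz (S :: C2_5 multiset) k"
proof (induct k arbitrary: S)
  case 0 show ?case by (rule dz_zero)
next
  case (Suc k S)
  show ?case
  proof (cases "short S")
    case True
    show ?thesis
      by (rule short_reduce[OF True]) (use Suc in auto)
  next
    case False
    define T where "T = set_mset S"
    have ST: "S = mset_set T" "size S = card T" and sf: "sumfree T"
      using set_form[OF False] unfolding T_def by auto
    have cT: "card T \<ge> 3 * k + 7" using Suc.prems ST by simp
    have z: "0 \<notin> T" using sf unfolding sumfree_def by blast
    have "k = 0 \<or> k = 1 \<or> k = 2 \<or> k = 3 \<or> k = 4" using Suc.prems by auto
    then have "dz (mset_set T) (Suc k)"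
    proof (elim disjE)
      assume k: "k = 0"
      obtain F where F: "F \<subseteq> T" "F \<noteq> {}" "sum id F = 0" using six[of T] cT k by auto
      have "dz (mset_set F) 1" using set_dz1[OF F(2,3)] by simp
      then show ?thesis using dz_set_mono[OF _ F(1)] k by simp
    next
      assume k: "k = 1"
      obtain Q where Q: "Q \<subseteq> T" "card Q = 4" "sum id Q = 0" using quad[OF z] cT k by auto
      have "card (T - Q) \<ge> 6" using cT k Q by (simp add: card_Diff_subset)
      then obtain F where F: "F \<subseteq> T - Q" "F \<noteq> {}" "sum id F = 0" using six[of "T - Q"] by auto
      have "dz (mset_set (T - Q)) 1" using dz_set_mono[OF _ F(1)] set_dz1[OF F(2,3)] by simp
      have Qne: "Q \<noteq> {}" using Q(2) by auto
      have "dz (mset_set T) (Suc 1)" by (rule dz_set_step[OF _ Q(1) Qne Q(3)]) (use \<open>dz (mset_set (T - Q)) 1\<close> in simp_all)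
      then show ?thesis using k by simp
    next
      assume k: "k = 2"
      obtain H where H: "subgroup_index2 H" "T \<subseteq> UNIV - H" using sf_coset[OF sf] cT k by auto
      show ?thesis using coset_quads13[OF H] cT k by simp
    next
      assume k: "k = 3"
      obtain H where H: "subgroup_index2 H" "T \<subseteq> UNIV - H" using sf_coset[OF sf] cT k by auto
      have "card T \<le> 16" using coset_card_le[OF H] .
      then have "T = UNIV - H" using card_subset_eq[OF _ H(2)] coset_card[OF H(1)] cT k by simp
      then show ?thesis using coset_full_quads[OF H(1)] k by simp
    next
      assume k: "k = 4"
      obtain H where H: "subgroup_index2 H" "T \<subseteq> UNIV - H" using sf_coset[OF sf] cT k by auto
      have "card T \<le> 16" using coset_card_le[OF H] .
      then show ?thesis using cT k by simp
    qed
    then show ?thesis using ST by simp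
  qed
qed

lemma L7: assumes "zero_sum (B :: C2_5 multiset)" "size B \<ge> 7" shows "dz B 2"
proof (cases "short B")
  case True
  show ?thesis unfolding numeral_2_eq_2
  proof (rule short_reduce[OF True])
    fix A assume A: "A \<subseteq># B" "size (B - A) \<ge> size B - 3" "zero_sum A"
    have "B - A \<noteq> {#}" using A(2) assms(2) by auto
    then show "dz (B - A) (Suc 0)" using dz1 zs_diff[OF assms(1) A(1,3)] by blast
  qed
next
  case False
  define T where "T = set_mset B"
  have ST: "B = mset_set T" "size B = card T"
    using set_form[OF False] unfolding T_def by auto
  have sT: "sum id T = 0" using assms(1) ST zs_mset_set by (metis finite)
  obtain F where F: "F \<subseteq> T" "F \<noteq> {}" "sum id F = 0" "card F \<le> 6" using six[of T] assms ST by auto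
  have "card (T - F) \<ge> 1" using F assms ST by (simp add: card_Diff_subset)
  then have "T - F \<noteq> {}" by (metis card.empty not_one_le_zero)
  then have "dz (mset_set (T - F)) 1" using set_dz1 sum_diff2[OF F(1) sT F(3)] by simp
  then have "dz (mset_set T) 2" using dz_set_step[OF _ F(1,2,3)] by (simp add: numeral_2_eq_2)
  then show ?thesis using ST by simp
qed

lemma LemA: "j \<le> 4 \<Longrightarrow> zero_sum B \<Longrightarrow> size B \<ge> 3 * j + 5 \<Longrightarrow> dz (B :: C2_5 multiset) (Suc j)"
proof (induct j arbitrary: B)
  case 0
  then have "B \<noteq> {#}" by auto
  then show ?case using dz1 0 by blast
next
  case (Suc j B)
  show ?case
  proof (cases "short B")
    case True
    show ?thesis
    proof (rule short_reduce[OF True])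
      fix A assume A: "A \<subseteq># B" "size (B - A) \<ge> size B - 3" "zero_sum A"
      show "dz (B - A) (Suc j)"
        using Suc.hyps[of "B - A"] Suc.prems zs_diff[OF Suc.prems(2) A(1,3)] A(2) by simp
    qed
  next
    case False
    define T where "T = set_mset B"
    have ST: "B = mset_set T" "size B = card T" and sf: "sumfree T"
      using set_form[OF False] unfolding T_def by auto
    have sT: "sum id T = 0" using Suc.prems(2) ST zs_mset_set by (metis finite)
    have cT: "card T \<ge> 3 * j + 8" using Suc.prems ST by simp
    have z: "0 \<notin> T" using sf unfolding sumfree_def by blast
    have "j = 0 \<or> j = 1 \<or> j = 2 \<or> j = 3" using Suc.prems by auto
    then have "dz (mset_set T) (Suc (Suc j))"
    proof (elim disjE)
      assume j: "j = 0"
      show ?thesis using L7[of "mset_set T"] Suc.prems ST j by (simp add: numeral_2_eq_2)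
    next
      assume j: "j = 1"
      obtain Q where Q: "Q \<subseteq> T" "card Q = 4" "sum id Q = 0" using quad[OF z] cT j by auto
      have "card (T - Q) \<ge> 7" using cT j Q by (simp add: card_Diff_subset)
      moreover have "zero_sum (mset_set (T - Q))" using sum_diff2[OF Q(1) sT Q(3)] by (simp add: zs_mset_set)
      ultimately have "dz (mset_set (T - Q)) 2" using L7 by simp
      have Qne: "Q \<noteq> {}" using Q(2) by auto
      have "dz (mset_set T) (Suc 2)" by (rule dz_set_step[OF _ Q(1) Qne Q(3)]) (use \<open>dz (mset_set (T - Q)) 2\<close> in simp_all)
      then show ?thesis using j by (simp add: numeral_2_eq_2)
    next
      assume j: "j = 2"
      obtain H where H: "subgroup_index2 H" "T \<subseteq> UNIV - H" using sf_coset[OF sf] cT j by auto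
      have "card T \<le> 16" using coset_card_le[OF H] .
      show ?thesis
      proof (cases "card T \<ge> 16")
        case True
        then show ?thesis using P1[of 4 "mset_set T"] j by simp
      next
        case False
        then show ?thesis using coset_no_zs[OF H] sT cT j by simp
      qed
    next
      assume j: "j = 3"
      obtain H where H: "subgroup_index2 H" "T \<subseteq> UNIV - H" using sf_coset[OF sf] cT j by auto
      have "card T \<le> 16" using coset_card_le[OF H] .
      then show ?thesis using cT j by simp
    qed
    then show ?thesis using ST by simp
  qed
qed




section \<open>No k+1 disjoint zero-sums in the extremal structure\<close>

lemma size2_mset: assumes "size M = 2" shows "\<exists>a b. M = {#a, b#}"
proof -
  have "M \<noteq> {#}" using assms by auto
  then obtain a where a: "a \<in># M" by blast
  have "size (M - {#a#}) = 1" using assms a by (simp add: size_Diff_submset)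
  then obtain b where "M - {#a#} = {#b#}" using size_1_singleton_mset by blast
  then have "M = {#a, b#}" using insert_DiffM[OF a] by simp
  then show ?thesis by blast
qed

definition wt :: "C2_5 set \<Rightarrow> C2_5 multiset \<Rightarrow> nat" where
  "wt H Z = size Z + size (filter_mset (\<lambda>g. g \<in> H) Z)"

lemma wt_add: "wt H (A + B) = wt H A + wt H B"
  unfolding wt_def by simp

lemma wt_mono: "A \<subseteq># B \<Longrightarrow> wt H A \<le> wt H B"
  unfolding wt_def by (simp add: add_mono size_mset_mono multiset_filter_mono)

lemma wt_part:
  fixes H :: "C2_5 set"
  assumes H: "subgroup_index2 H" and sqf: "squarefree_seq B" and z: "0 \<notin># B"
    and Z: "Z \<subseteq># B" "Z \<noteq> {#}" "zero_sum Z"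
  shows "wt H Z \<ge> 4"
proof -
  define a where "a = size (filter_mset (\<lambda>g. g \<in> H) Z)"
  define b where "b = size (filter_mset (\<lambda>g. g \<notin> H) Z)"
  have sz: "size Z = a + b"
  proof -
    have "size Z = size (filter_mset (\<lambda>g. g \<in> H) Z + filter_mset (\<lambda>g. g \<notin> H) Z)"
      using arg_cong[OF multiset_partition[of Z "\<lambda>g. g \<in> H"], of size] .
    then show ?thesis unfolding a_def b_def by (simp only: size_union)
  qed
  have ev: "even b" unfolding b_def using zero_sum_even[OF H Z(3)] .
  have w: "wt H Z = 2 * a + b" unfolding wt_def a_def[symmetric] using sz by simp
  have cnt: "count Z g \<le> 1" for g
  proof -
    have "count Z g \<le> count B g" by (rule mset_subset_eq_count[OF Z(1)])
    moreover have "count B g \<le> 1" using sqf unfolding squarefree_seq_def by blast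
    ultimately show ?thesis by simp
  qed
  have z': "0 \<notin># Z" using z mset_subset_eqD[OF Z(1)] by blast
  show ?thesis
  proof (cases "a \<ge> 2")
    case True then show ?thesis using w by simp
  next
    case False
    have "size Z \<noteq> 0" using Z(2) by simp
    show ?thesis
    proof (cases "a = 1")
      case a1: True
      have "b \<noteq> 0"
      proof
        assume "b = 0"
        then have "size Z = 1" using sz a1 by simp
        then obtain h where "Z = {#h#}" using size_1_singleton_mset by blast
        then show False using Z(3) z' unfolding zero_sum_def by simp
      qed
      then have "b \<ge> 2" using ev by presburger
      then show ?thesis using w a1 by simp
    next
      case a0: False
      then have "a = 0" using False by simp
      then have bZ: "b = size Z" using sz by simp
      have "b \<noteq> 2"
      proof
        assume "b = 2"
        then obtain u v where uv: "Z = {#u, v#}" using size2_mset bZ by metis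
        then have "u = v" using Z(3) unfolding zero_sum_def by (simp add: add_eq0_iff)
        then have "count Z u = 2" using uv by simp
        then show False using cnt[of u] by simp
      qed
      then have "b \<ge> 4" using ev \<open>size Z \<noteq> 0\<close> bZ by presburger
      then show ?thesis using w by simp
    qed
  qed
qed

lemma sub_sum_mset: assumes "Z \<in># F" shows "Z \<subseteq># sum_mset F"
proof -
  have e: "add_mset Z (F - {#Z#}) = F" by (rule insert_DiffM[OF assms])
  have "sum_mset F = Z + sum_mset (F - {#Z#})" using arg_cong[OF e, of sum_mset] by simp
  then show ?thesis by simp
qed

lemma wt_sum: "\<forall>Z\<in>#F. 4 \<le> wt H Z \<Longrightarrow> 4 * size F \<le> wt H (sum_mset F)"
proof (induct F)
  case empty then show ?case by simp
next
  case (add Z F) then show ?case by (simp add: wt_add)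
qed

lemma P2:
  fixes H :: "C2_5 set" and B :: "C2_5 multiset"
  assumes H: "subgroup_index2 H" and sqf: "squarefree_seq B" and z: "0 \<notin># B"
    and sz: "size B = 3 * k + 4" and hB: "size (filter_mset (\<lambda>g. g \<in> H) B) \<le> k - 2" and k: "k \<ge> 2"
  shows "\<not> dz B (Suc k)"
proof
  assume "dz B (Suc k)"
  then obtain F where F: "size F = Suc k" "\<forall>A\<in>#F. A \<noteq> {#} \<and> zero_sum A" "sum_mset F \<subseteq># B"
    unfolding has_disjoint_zs_def by blast
  have all4: "\<forall>Z\<in>#F. 4 \<le> wt H Z"
  proof
    fix Z assume Z: "Z \<in># F"
    have "Z \<subseteq># B" using sub_sum_mset[OF Z] F(3) by (rule subset_mset.order_trans)
    then show "4 \<le> wt H Z" using wt_part[OF H sqf z] F(2) Z by blast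
  qed
  have "4 * Suc k \<le> wt H (sum_mset F)" using wt_sum[OF all4] F(1) by simp
  also have "\<dots> \<le> wt H B" using wt_mono[OF F(3)] .
  also have "\<dots> \<le> 3 * k + 4 + (k - 2)" unfolding wt_def using sz hB by simp
  finally show False using k by simp
qed

lemma filter_le_T:
  fixes H :: "C2_5 set"
  assumes "T \<subseteq># B" "\<forall>g\<in>#B - T. g \<in> UNIV - H"
  shows "size (filter_mset (\<lambda>g. g \<in> H) B) \<le> size T"
proof -
  have "filter_mset (\<lambda>g. g \<in> H) B \<subseteq># T"
  proof (rule mset_subset_eqI)
    fix g
    show "count (filter_mset (\<lambda>g. g \<in> H) B) g \<le> count T g"
    proof (cases "g \<in> H")
      case True
      have "\<not> count T g < count B g"
      proof
        assume "count T g < count B g"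
        then have "g \<in># B - T" by (simp add: in_diff_count)
        then show False using assms(2) True by blast
      qed
      then show ?thesis using True by simp
    next
      case False then show ?thesis by simp
    qed
  qed
  then show ?thesis by (rule size_mset_mono)
qed




lemma card_split_H: "card (A \<inter> H) + card (A - H) = card (A :: C2_5 set)"
  using card_Int_Diff[of A H] by simp

lemma two_hyperplanes:
  fixes H H2 :: "C2_5 set"
  assumes H: "subgroup_index2 H" and H2: "subgroup_index2 H2" and ne: "H \<noteq> H2"
  shows "card ((UNIV - H) - H2) = 8"
proof -
  have "\<not> H2 \<subseteq> H"
  proof
    assume "H2 \<subseteq> H"
    then have "H2 = H" using card_subset_eq[of H H2] H_card[OF H] H_card[OF H2] by simp
    then show False using ne by simp
  qed
  then obtain u where u: "u \<in> H2" "u \<notin> H" by blast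
  define X where "X = (UNIV - H) - H2"
  define Y where "Y = H - H2"
  have inj: "inj_on (\<lambda>x. x + u) A" for A by (auto simp: inj_on_def)
  have "(\<lambda>x. x + u) ` X \<subseteq> Y" unfolding X_def Y_def
    using H_add_out_out[OF H _ u(2)] H_add_out_in[OF H2 _ u(1)] by blast
  then have c1: "card X \<le> card Y" using card_inj_on_le[OF inj] by simp
  have "(\<lambda>x. x + u) ` Y \<subseteq> X" unfolding X_def Y_def
    using H_add_in_out[OF H _ u(2)] H_add_out_in[OF H2 _ u(1)] by blast
  then have c2: "card Y \<le> card X" using card_inj_on_le[OF inj] by simp
  have "X \<union> Y = UNIV - H2" "X \<inter> Y = {}" unfolding X_def Y_def by auto
  then have "card X + card Y = 16" using card_Un_disjoint[of X Y] coset_card[OF H2] by simp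
  then show ?thesis using c1 c2 unfolding X_def by simp
qed

lemma sum_hh:
  fixes H H2 :: "C2_5 set"
  assumes H: "subgroup_index2 H" and H2: "subgroup_index2 H2" and ne: "H \<noteq> H2"
  shows "sum id ((UNIV - H) - H2) = 0"
proof -
  define X where "X = (UNIV - H) - H2"
  have cX: "card X = 2 * 4" unfolding X_def using two_hyperplanes[OF assms] by simp
  then have "X \<noteq> {}" by auto
  then obtain u where u: "u \<in> X" by blast
  have "card (X - {u}) \<ge> 1" using cX u by (simp add: card_Diff_singleton)
  then have "X - {u} \<noteq> {}" by (metis card.empty not_one_le_zero)
  then obtain v where v: "v \<in> X" "v \<noteq> u" by blast
  define d where "d = u + v"
  have d0: "d \<noteq> 0" unfolding d_def using v by (simp add: add_eq0_iff)
  have dH: "d \<in> H" "d \<in> H2" unfolding d_def using u v H_add_out_out[OF H] H_add_out_out[OF H2]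
    unfolding X_def by auto
  have cl: "\<forall>x\<in>X. x + d \<in> X" unfolding X_def
    using H_add_out_in[OF H _ dH(1)] H_add_out_in[OF H2 _ dH(2)] by blast
  show ?thesis using pair_sum[OF d0 _ cX cl] unfolding X_def by simp
qed

lemma bad_case:
  fixes H :: "C2_5 set" and S :: "C2_5 set"
  assumes IH: "\<And>B' :: C2_5 multiset. zero_sum B' \<Longrightarrow> size B' = 3 * k + 1 \<Longrightarrow> \<not> dz B' k \<Longrightarrow>
                 (\<exists>H. subgroup_index2 H \<and> card (set_mset B' \<inter> H) \<le> k - 3)"
    and k: "3 \<le> k" "k \<le> 5"
    and sS: "sum id S = 0" and cS: "card S = 3 * k + 4" and z: "0 \<notin> S"
    and nd: "\<not> dz (mset_set S) (Suc k)"
    and H: "subgroup_index2 H" and x: "x \<in> S" "x \<in> H" and cSH: "card (S \<inter> H) = k"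
    and k3: "k = 3 \<Longrightarrow> sum id (S \<inter> H) = 0"
  shows False
proof -
  define C where "C = S - H"
  have cC: "card C = 2 * k + 4" unfolding C_def using card_split_H[of S H] cS cSH by simp
  have CH: "C \<subseteq> UNIV - H" unfolding C_def by blast
  have x0: "x \<noteq> 0" using x z by blast
  define Bad where "Bad = {c\<in>C. c + x \<notin> C}"
  have "Bad \<subseteq> (\<lambda>m. m + x) ` ((UNIV - H) - C)"
  proof
    fix c assume c: "c \<in> Bad"
    then have "c + x \<in> (UNIV - H) - C" unfolding Bad_def using CH H_add_out_in[OF H _ x(2)] by blast
    moreover have "c = (c + x) + x" by simp
    ultimately show "c \<in> (\<lambda>m. m + x) ` ((UNIV - H) - C)" by blast
  qed
  then have "card Bad \<le> card ((\<lambda>m. m + x) ` ((UNIV - H) - C))" by (intro card_mono) simp_all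
  also have "\<dots> \<le> card ((UNIV - H) - C)" by (rule card_image_le) simp
  also have "\<dots> = 16 - (2 * k + 4)" using card_Diff_subset[OF _ CH] coset_card[OF H] cC by simp
  finally have "card Bad < card C" using cC k by simp
  then have "C - Bad \<noteq> {}"
  proof -
    assume lt: "card Bad < card C"
    show ?thesis
    proof
      assume "C - Bad = {}" then have "C \<subseteq> Bad" by blast
      then have "card C \<le> card Bad" by (intro card_mono) simp_all
      then show False using lt by simp
    qed
  qed
  then obtain c1 where c1: "c1 \<in> C" "c1 + x \<in> C" unfolding Bad_def by blast
  have c1H: "c1 \<notin> H" "c1 + x \<notin> H" using c1 unfolding C_def by auto
  have d1: "c1 \<noteq> x" using c1H x by blast
  have d2: "c1 + x \<noteq> x" using c1H H0[OF H] add_right_eq[of c1 x] by auto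
  have d3: "c1 + x \<noteq> c1" using x0 by (simp add: add_left_eq)
  define A2 where "A2 = {x, c1, c1 + x}"
  have A2S: "A2 \<subseteq> S" unfolding A2_def using x c1 unfolding C_def by blast
  have sA2: "sum id A2 = 0" unfolding A2_def using d1 d2 d3 by simp
  have cA2: "card A2 = 3" unfolding A2_def using d1 d2 d3 by simp
  define S2 where "S2 = S - A2"
  have cS2: "card S2 = 3 * k + 1" unfolding S2_def using cS cA2 A2S by (simp add: card_Diff_subset)
  have sS2: "sum id S2 = 0" unfolding S2_def using sum_diff2[OF A2S sS sA2] .
  have nd2: "\<not> dz (mset_set S2) k"
  proof
    assume "dz (mset_set S2) k"
    then have "dz (mset_set S) (Suc k)"
      using dz_set_step[OF _ A2S _ sA2] unfolding S2_def A2_def by simp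
    then show False using nd by simp
  qed
  obtain H2 where H2: "subgroup_index2 H2" and c2: "card (S2 \<inter> H2) \<le> k - 3"
    using IH[of "mset_set S2"] sS2 cS2 nd2 by (auto simp: zs_mset_set)
  have S2H: "S2 \<inter> H = (S \<inter> H) - {x}" unfolding S2_def A2_def using c1H by auto
  have cS2H: "card (S2 \<inter> H) = k - 1" unfolding S2H using cSH x by (simp add: card_Diff_singleton)
  have ne: "H \<noteq> H2"
  proof
    assume "H = H2" then show False using c2 cS2H k by simp
  qed
  have cS2out: "card (S2 - H2) \<ge> 2 * k + 4" using card_split_H[of S2 H2] cS2 c2 k by linarith
  have "S2 - H2 \<subseteq> ((S2 \<inter> H) - H2) \<union> ((S2 - H) - H2)" by blast
  then have "card (S2 - H2) \<le> card (((S2 \<inter> H) - H2) \<union> ((S2 - H) - H2))" by (intro card_mono) simp_all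
  also have "\<dots> \<le> card ((S2 \<inter> H) - H2) + card ((S2 - H) - H2)" by (rule card_Un_le)
  finally have "card (S2 - H2) \<le> card ((S2 \<inter> H) - H2) + card ((S2 - H) - H2)" .
  also have "card ((S2 \<inter> H) - H2) \<le> card (S2 \<inter> H)" by (rule card_mono) auto
  finally have t: "2 * k + 4 \<le> (k - 1) + card ((S2 - H) - H2)" using cS2out cS2H by linarith
  have sub8: "(S2 - H) - H2 \<subseteq> (UNIV - H) - H2" by blast
  have le8: "card ((S2 - H) - H2) \<le> 8"
    using card_mono[OF _ sub8] two_hyperplanes[OF H H2 ne] by simp
  have k3': "k = 3" using t le8 k by linarith
  have S2C: "S2 - H = C - {c1, c1 + x}" unfolding S2_def A2_def C_def using x by auto
  have cS2C: "card (S2 - H) = 8" unfolding S2C using cC c1 k3' d3 by (simp add: card_Diff_subset)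
  have ge8: "card ((S2 - H) - H2) \<ge> 8" using t k3' by simp
  have e1: "(S2 - H) - H2 = S2 - H"
    using card_subset_eq[of "S2 - H" "(S2 - H) - H2"] ge8 cS2C card_mono[of "S2 - H" "(S2 - H) - H2"] by auto
  have e2: "(S2 - H) - H2 = (UNIV - H) - H2"
    using card_subset_eq[OF _ sub8] le8 ge8 two_hyperplanes[OF H H2 ne] by simp
  have sC': "sum id (S2 - H) = 0" using sum_hh[OF H H2 ne] e1 e2 by simp
  have pair_sub: "{c1, c1 + x} \<subseteq> C" using c1 by blast
  have "sum id C = sum id (C - {c1, c1 + x}) + sum id {c1, c1 + x}"
    using sum.subset_diff[OF pair_sub] by simp
  also have "\<dots> = x" using sC' S2C d3 by simp
  finally have sCx: "sum id C = x" .
  have "sum id S = sum id (S \<inter> H) + sum id C" unfolding C_def by (rule sum.Int_Diff) simp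
  then have "sum id S = x" using k3[OF k3'] sCx by simp
  then show False using sS x0 by simp
qed




section \<open>The characterization\<close>

lemma img_eq:
  fixes H :: "C2_5 set"
  assumes sf: "sumfree S" and H: "subgroup_index2 H" and h: "h \<in> S" "h \<in> H" and c: "card (S - H) = 8"
  shows "(\<lambda>x. x + h) ` (S - H) = (UNIV - H) - (S - H)"
proof -
  define X where "X = S - H"
  have inj: "inj_on (\<lambda>x. x + h) X" by (auto simp: inj_on_def)
  have sub: "(\<lambda>x. x + h) ` X \<subseteq> (UNIV - H) - X"
  proof
    fix y assume "y \<in> (\<lambda>x. x + h) ` X"
    then obtain x where x: "x \<in> X" "y = x + h" by blast
    have "y \<notin> H" using x H_add_out_in[OF H _ h(2)] unfolding X_def by blast
    moreover have "y \<notin> X"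
    proof
      assume "y \<in> X"
      moreover have "x \<noteq> h" using x h unfolding X_def by blast
      ultimately show False using sf x h unfolding sumfree_def X_def by blast
    qed
    ultimately show "y \<in> (UNIV - H) - X" by blast
  qed
  have "card ((UNIV - H) - X) = 8" using card_Diff_subset[of X "UNIV - H"] coset_card[OF H] c
    unfolding X_def by auto
  moreover have "card ((\<lambda>x. x + h) ` X) = 8" using card_image[OF inj] c unfolding X_def by simp
  ultimately show ?thesis using card_subset_eq[OF _ sub] unfolding X_def by simp
qed

lemma k2_sf:
  assumes sf: "sumfree S" and c: "card S = 10" and s: "sum id S = 0"
  shows "\<exists>H. subgroup_index2 H \<and> S \<inter> H = {}"
proof -
  have "S \<noteq> {}" using c by auto
  then obtain c where c0: "c \<noteq> 0" and c2: "card (S \<inter> Hc c) \<le> 2" using fourier[OF sf] by blast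
  define H where "H = Hc c"
  have H: "subgroup_index2 H" unfolding H_def using Hc_index2[OF c0] .
  have ev: "even (card (S - H))" using set_sum_H_iff[OF H, of S] s H0[OF H] by simp
  have sp: "card (S \<inter> H) + card (S - H) = 10" using card_split_H[of S H] c by simp
  have "card (S \<inter> H) = 0 \<or> card (S \<inter> H) = 2" using ev sp c2 unfolding H_def by presburger
  then show ?thesis
  proof
    assume "card (S \<inter> H) = 0" then show ?thesis using H by auto
  next
    assume c2': "card (S \<inter> H) = 2"
    then obtain h0 h1 where hh: "S \<inter> H = {h0, h1}" "h0 \<noteq> h1" by (auto simp: card_2_iff)
    have cX: "card (S - H) = 8" using sp c2' by simp
    have h0: "h0 \<in> S" "h0 \<in> H" and h1: "h1 \<in> S" "h1 \<in> H" using hh by auto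
    define X where "X = S - H"
    define d where "d = h0 + h1"
    have d0: "d \<noteq> 0" unfolding d_def using hh by (simp add: add_eq0_iff)
    have e0: "(\<lambda>x. x + h0) ` X = (\<lambda>x. x + h1) ` X"
      using img_eq[OF sf H h0 cX] img_eq[OF sf H h1 cX] unfolding X_def by simp
    have cl: "\<forall>x\<in>X. x + d \<in> X"
    proof
      fix x assume x: "x \<in> X"
      then have "x + h0 \<in> (\<lambda>x. x + h1) ` X" using e0 by blast
      then obtain x' where x': "x' \<in> X" "x + h0 = x' + h1" by blast
      then have "x + d = x'" unfolding d_def by (metis add.assoc add_self'(2))
      then show "x + d \<in> X" using x' by simp
    qed
    have sX: "sum id X = 0" using pair_sum[OF d0 _ _ cl, of 4] cX unfolding X_def by simp
    have "sum id S = sum id (S \<inter> H) + sum id X" unfolding X_def by (rule sum.Int_Diff) simp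
    then have "sum id S = d" using sX hh unfolding d_def by simp
    then show ?thesis using s d0 by simp
  qed
qed


lemma small_contra:
  fixes B :: "C2_5 multiset"
  assumes zs: "zero_sum B" and sz: "size B = 3 * k + 7" and k: "k \<le> 4"
    and nd: "\<not> dz B (Suc (Suc k))"
    and A: "A \<subseteq># B" "A \<noteq> {#}" "zero_sum A" "size A \<le> 2"
  shows False
proof -
  have "size (B - A) = size B - size A" using A(1) by (simp add: size_Diff_submset)
  then have "size (B - A) \<ge> 3 * k + 5" using sz A(4) by simp
  then have "dz (B - A) (Suc k)" using LemA[OF k zs_diff[OF zs A(1,3)]] by simp
  then show False using dz_step[OF A(1,2,3)] nd by blast
qed

lemma P4:
  "2 \<le> k \<Longrightarrow> k \<le> 5 \<Longrightarrow> zero_sum B \<Longrightarrow> size B = 3 * k + 4 \<Longrightarrow> \<not> dz B (Suc k) \<Longrightarrow>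
   squarefree_seq B \<and> 0 \<notin># B \<and> (\<exists>H. subgroup_index2 H \<and> card (set_mset (B :: C2_5 multiset) \<inter> H) \<le> k - 2)"
proof (induct k arbitrary: B)
  case 0 then show ?case by simp
next
  case (Suc k B)
  note zs = Suc.prems(3) and sz0 = Suc.prems(4) and nd = Suc.prems(5)
  have sz: "size B = 3 * k + 7" using sz0 by simp
  have k4: "k \<le> 4" using Suc.prems by simp
  have nd': "\<not> dz B (Suc (Suc k))" using nd by simp
  have sqz: "squarefree_seq B \<and> 0 \<notin># B"
  proof (rule ccontr)
    assume "\<not> (squarefree_seq B \<and> 0 \<notin># B)"
    then obtain A where "A \<subseteq># B" "A \<noteq> {#}" "zero_sum A" "size A \<le> 2" using short2[of B] by blast
    then show False using small_contra[OF zs sz k4 nd'] by blast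
  qed
  define S where "S = set_mset B"
  have BS: "B = mset_set S"
  proof -
    have "mset_set (set_mset B) = B" using sqf_eq sqz by blast
    then show ?thesis unfolding S_def by simp
  qed
  have cS: "card S = 3 * k + 7" using sz BS by (metis size_mset_set)
  have sS: "sum id S = 0" using zs BS zs_mset_set by (metis finite)
  have z: "0 \<notin> S" unfolding S_def using sqz by simp
  have "\<exists>H. subgroup_index2 H \<and> card (S \<inter> H) \<le> Suc k - 2"
  proof (cases "short B")
    case False
    have sf: "sumfree S" using set_form(3)[OF False] unfolding S_def .
    show ?thesis
    proof (cases "k = 1")
      case True
      then obtain H where "subgroup_index2 H" "S \<inter> H = {}" using k2_sf[OF sf _ sS] cS by auto
      then show ?thesis by auto
    next
      case False
      then obtain H where "subgroup_index2 H" "S \<subseteq> UNIV - H" using sf_coset[OF sf] cS Suc.prems(1) by auto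
      then have "S \<inter> H = {}" by blast
      then show ?thesis using \<open>subgroup_index2 H\<close> by auto
    qed
  next
    case True
    then obtain A where A: "A \<subseteq># B" "A \<noteq> {#}" "zero_sum A" "size A \<le> 3" unfolding short_def by blast
    have sA: "size A = 3" using small_contra[OF zs sz k4 nd' A(1,2,3)] A(4) by fastforce
    have szBA: "size (B - A) = 3 * k + 4" using A(1) sA sz by (simp add: size_Diff_submset)
    have zBA: "zero_sum (B - A)" using zs_diff[OF zs A(1,3)] .
    have ndBA: "\<not> dz (B - A) (Suc k)" using dz_step[OF A(1,2,3)] nd' by blast
    show ?thesis
    proof (cases "k = 1")
      case True
      then have "dz (B - A) 2" using L7[OF zBA] szBA by simp
      then show ?thesis using ndBA True by (simp add: numeral_2_eq_2)
    next
      case False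
      then have k2: "2 \<le> k" using Suc.prems(1) by simp
      obtain H where H: "subgroup_index2 H" and cH: "card (set_mset (B - A) \<inter> H) \<le> k - 2"
        using Suc.hyps[OF k2 _ zBA szBA ndBA] k4 by auto
      define Aset where "Aset = set_mset A"
      have sqA: "squarefree_seq A" using sqz A(1) unfolding squarefree_seq_def
        by (meson mset_subset_eq_count order_trans)
      have AA: "A = mset_set Aset" unfolding Aset_def using sqf_eq[OF sqA] by simp
      have cA: "card Aset = 3" using sA AA by (metis size_mset_set)
      have sAs: "sum id Aset = 0" using A(3) AA zs_mset_set by (metis finite)
      have AsS: "Aset \<subseteq> S" unfolding Aset_def S_def using A(1) by (rule set_mset_mono)
      have fS: "finite S" by simp
      have "B - A = mset_set (S - Aset)" using mset_set_Diff[OF fS AsS] BS AA by simp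
      then have BA: "set_mset (B - A) = S - Aset" by simp
      have evA: "even (card (Aset - H))" using set_sum_H_iff[OF H, of Aset] sAs H0[OF H] by simp
      have evS: "even (card (S - H))" using set_sum_H_iff[OF H, of S] sS H0[OF H] by simp
      have splitS: "card (S \<inter> H) = card ((S - Aset) \<inter> H) + card (Aset \<inter> H)"
      proof -
        have "S \<inter> H = ((S - Aset) \<inter> H) \<union> (Aset \<inter> H)" using AsS by blast
        then show ?thesis using card_Un_disjoint[of "(S - Aset) \<inter> H" "Aset \<inter> H"] by auto
      qed
      have cA2: "card (Aset \<inter> H) + card (Aset - H) = 3" using card_split_H[of Aset H] cA by simp
      have c': "card ((S - Aset) \<inter> H) \<le> k - 2" using cH BA by simp
      have spS: "card (S \<inter> H) + card (S - H) = 3 * k + 7" using card_split_H[of S H] cS by simp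
      show ?thesis
      proof (cases "card (Aset - H) = 0")
        case False
        then have "card (Aset - H) = 2" using evA cA2 by presburger
        then have "card (Aset \<inter> H) = 1" using cA2 by simp
        then show ?thesis using H splitS c' k2 by auto
      next
        case A0: True
        have cAH: "card (Aset \<inter> H) = 3" using cA2 A0 by linarith
        have AH: "Aset \<subseteq> H" using A0 by simp
        show ?thesis
        proof (cases "card (S \<inter> H) \<le> Suc k - 2")
          case True then show ?thesis using H by blast
        next
          case big: False
          have cSH: "card (S \<inter> H) = Suc k"
            using big splitS c' cAH evS spS k2 by presburger
          have "Aset \<noteq> {}" using cA by auto
          then obtain x where x: "x \<in> Aset" by blast
          have xH: "x \<in> H" using x AH by blast
          have IH': "\<exists>H. subgroup_index2 H \<and> card (set_mset B' \<inter> H) \<le> Suc k - 3"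
            if "zero_sum B'" "size B' = 3 * Suc k + 1" "\<not> dz B' (Suc k)" for B' :: "C2_5 multiset"
            using Suc.hyps[OF k2 _ that(1)] that(2,3) k4 by auto
          have k3: "sum id (S \<inter> H) = 0" if "Suc k = 3"
          proof -
            have "card ((S - Aset) \<inter> H) = 0" using c' that by simp
            then have "(S - Aset) \<inter> H = {}" by simp
            then have "S \<inter> H = Aset" using AH AsS by blast
            then show ?thesis using sAs by simp
          qed
          have "False"
            by (rule bad_case[OF IH' _ _ sS _ z _ H _ xH cSH k3])
               (use k2 Suc.prems(2) cS nd BS x AsS in auto)
          then show ?thesis by simp
        qed
      qed
    qed
  qed
  then show ?case using sqz unfolding S_def by simp
qed




section \<open>Lengths\<close>

lemma lengths_le: "t \<in> lengths B \<Longrightarrow> t \<le> size B"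
  unfolding lengths_def minimal_zero_sum_def
  using size_sum_mset_ge by fastforce

lemma lengths_finite: "finite (lengths B)"
  using lengths_le by (meson finite_atMost finite_subset subsetI atMost_iff)

lemma lengths_dz: assumes "t \<in> lengths B" shows "dz B t"
proof -
  obtain F where F: "size F = t" "\<forall>A\<in>#F. minimal_zero_sum A" "sum_mset F = B"
    using assms unfolding lengths_def by blast
  then show ?thesis unfolding has_disjoint_zs_def minimal_zero_sum_def
    by (intro exI[of _ F]) auto
qed

lemma factor:
  fixes A :: "C2_5 multiset"
  shows "zero_sum A \<Longrightarrow> \<exists>F. (\<forall>Z\<in>#F. minimal_zero_sum Z) \<and> sum_mset F = A"
proof (induct "size A" arbitrary: A rule: less_induct)
  case less
  show ?case
  proof (cases "A = {#}")
    case True then show ?thesis by (intro exI[of _ "{#}"]) simp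
  next
    case ne: False
    show ?thesis
    proof (cases "minimal_zero_sum A")
      case True then show ?thesis by (intro exI[of _ "{#A#}"]) simp
    next
      case False
      then obtain T where T: "T \<subseteq># A" "T \<noteq> {#}" "zero_sum T" "T \<noteq> A"
        using ne less.prems unfolding minimal_zero_sum_def by blast
      have s1: "size T < size A" using T(1,4) by (simp add: mset_subset_size subset_mset.le_neq_trans)
      have s2: "size (A - T) < size A"
      proof -
        have "size T > 0" using T(2) by (simp add: nonempty_has_size)
        moreover have "size T \<le> size A" using size_mset_mono[OF T(1)] .
        ultimately show ?thesis using size_Diff_submset[OF T(1)] by simp
      qed
      obtain F1 where F1: "\<forall>Z\<in>#F1. minimal_zero_sum Z" "sum_mset F1 = T" using less.hyps[OF s1 T(3)] by blast
      obtain F2 where F2: "\<forall>Z\<in>#F2. minimal_zero_sum Z" "sum_mset F2 = A - T"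
        using less.hyps[OF s2 zs_diff[OF less.prems T(1,3)]] by blast
      have "sum_mset (F1 + F2) = A" using F1(2) F2(2) T(1) by simp
      then show ?thesis using F1(1) F2(1) by (intro exI[of _ "F1 + F2"]) auto
    qed
  qed
qed

lemma factor_all:
  fixes F :: "C2_5 multiset multiset"
  shows "\<forall>Z\<in>#F. Z \<noteq> {#} \<and> zero_sum Z \<Longrightarrow>
    \<exists>G. (\<forall>Y\<in>#G. minimal_zero_sum Y) \<and> sum_mset G = sum_mset F \<and> size G \<ge> size F"
proof (induct F)
  case empty then show ?case by (intro exI[of _ "{#}"]) simp
next
  case (add Z F)
  obtain G where G: "\<forall>Y\<in>#G. minimal_zero_sum Y" "sum_mset G = sum_mset F" "size G \<ge> size F"
    using add by auto
  obtain GZ where GZ: "\<forall>Y\<in>#GZ. minimal_zero_sum Y" "sum_mset GZ = Z" using factor add.prems by auto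
  have "GZ \<noteq> {#}" using GZ(2) add.prems by auto
  then have "size GZ \<ge> 1" by (simp add: Suc_leI nonempty_has_size)
  then show ?case using G GZ by (intro exI[of _ "GZ + G"]) auto
qed

lemma dz_lengths:
  fixes B :: "C2_5 multiset"
  assumes zs: "zero_sum B" and d: "dz B k"
  shows "\<exists>t\<ge>k. t \<in> lengths B"
proof -
  obtain F where F: "size F = k" "\<forall>A\<in>#F. A \<noteq> {#} \<and> zero_sum A" "sum_mset F \<subseteq># B"
    using d unfolding has_disjoint_zs_def by blast
  obtain G where G: "\<forall>Y\<in>#G. minimal_zero_sum Y" "sum_mset G = sum_mset F" "size G \<ge> size F"
    using factor_all[OF F(2)] by blast
  define R where "R = B - sum_mset F"
  have zR: "zero_sum R" unfolding R_def using zs_diff[OF zs F(3)] zs_sum_mset F(2) by blast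
  obtain GR where GR: "\<forall>Y\<in>#GR. minimal_zero_sum Y" "sum_mset GR = R" using factor[OF zR] by blast
  have "sum_mset (G + GR) = B" using G(2) GR(2) F(3) unfolding R_def by simp
  then have "\<exists>F. size F = size (G + GR) \<and> (\<forall>A\<in>#F. minimal_zero_sum A) \<and> sum_mset F = B"
    using G(1) GR(1) by (intro exI[of _ "G + GR"]) auto
  then have "size (G + GR) \<in> lengths B" unfolding lengths_def by simp
  moreover have "size (G + GR) \<ge> k" using G(3) F(1) by simp
  ultimately show ?thesis by blast
qed

lemma max_lengths_iff:
  fixes B :: "C2_5 multiset"
  assumes zs: "zero_sum B" and dk: "dz B k"
  shows "Max (lengths B) = k \<longleftrightarrow> \<not> dz B (Suc k)"
proof
  assume M: "Max (lengths B) = k"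
  show "\<not> dz B (Suc k)"
  proof
    assume "dz B (Suc k)"
    then obtain t where t: "t \<ge> Suc k" "t \<in> lengths B" using dz_lengths[OF zs] by blast
    have "t \<le> Max (lengths B)" using Max_ge[OF lengths_finite t(2)] .
    then show False using M t by simp
  qed
next
  assume nd: "\<not> dz B (Suc k)"
  obtain t where t: "t \<ge> k" "t \<in> lengths B" using dz_lengths[OF zs dk] by blast
  have le: "\<forall>y\<in>lengths B. y \<le> k"
  proof
    fix y assume "y \<in> lengths B"
    then have "dz B y" by (rule lengths_dz)
    then show "y \<le> k" using nd dz_le[of B y "Suc k"] by (cases "y \<le> k") auto
  qed
  then have "t = k" using t by auto
  then show "Max (lengths B) = k" using Max_eqI[OF lengths_finite] le t by blast
qed




section \<open>Examples and the value of the k-th Davenport constant\<close>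

definition ex_prop :: "nat \<Rightarrow> C2_5 set \<Rightarrow> C2_5 set \<Rightarrow> bool" where
  "ex_prop k E H \<longleftrightarrow> subgroup_index2 H \<and> sum id E = 0 \<and> 0 \<notin> E \<and> card E = 3 * k + 4 \<and>
     card (E \<inter> H) = k - 2"

lemma ex5: "\<exists>E H. ex_prop 5 E H"
proof -
  have "card (UNIV - {0::C2_5}) = 31" using cardG by simp
  then have "UNIV - {0::C2_5} \<noteq> {}" by (metis card.empty zero_neq_numeral)
  then obtain c :: C2_5 where c: "c \<noteq> 0" by blast
  define H where "H = Hc c"
  have H: "subgroup_index2 H" unfolding H_def using Hc_index2[OF c] .
  obtain t1 where t1: "t1 \<in> H" "t1 \<noteq> 0" using H_nonzero[OF H] by blast
  have "card (H - {0, t1}) = 14" using H_card[OF H] H0[OF H] t1 by (simp add: card_Diff_subset)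
  then have "H - {0, t1} \<noteq> {}" by (metis card.empty zero_neq_numeral)
  then obtain t2 where t2: "t2 \<in> H" "t2 \<noteq> 0" "t2 \<noteq> t1" by blast
  have t3: "t1 + t2 \<in> H" "t1 + t2 \<noteq> 0" "t1 + t2 \<noteq> t1" "t1 + t2 \<noteq> t2"
    using H_add[OF H t1(1) t2(1)] t2 t1 by (auto simp: add_eq0_iff add_left_eq add_right_eq)
  define T where "T = {t1, t2, t1 + t2}"
  define E where "E = (UNIV - H) \<union> T"
  have TH: "T \<subseteq> H" unfolding T_def using t1 t2 t3 by blast
  have cT: "card T = 3" unfolding T_def using t2 t3 by auto
  have disj: "(UNIV - H) \<inter> T = {}" using TH by blast
  have cE: "card E = 19" unfolding E_def using card_Un_disjoint[OF _ _ disj] coset_card[OF H] cT by simp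
  have EH: "E \<inter> H = T" unfolding E_def using TH by blast
  have z: "0 \<notin> E" unfolding E_def T_def using H0[OF H] t1 t2 t3 by auto
  have "sum id E = sum id (UNIV - H) + sum id T" unfolding E_def by (rule sum.union_disjoint) (use disj in auto)
  also have "sum id T = 0" unfolding T_def using t2 t3 by simp
  finally have "sum id E = 0" using coset_sum[OF H] by simp
  then have "ex_prop 5 E H" unfolding ex_prop_def using H z cE EH cT by simp
  then show ?thesis by blast
qed

lemma ex_step:
  assumes k: "3 \<le> k" "k \<le> 5" and ex: "ex_prop k E H"
  shows "\<exists>E'. ex_prop (k - 1) E' H"
proof -
  have H: "subgroup_index2 H" and sE: "sum id E = 0" and z: "0 \<notin> E" and cE: "card E = 3 * k + 4"
    and cEH: "card (E \<inter> H) = k - 2" using ex unfolding ex_prop_def by auto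
  have "card (E \<inter> H) \<ge> 1" using cEH k by simp
  then have "E \<inter> H \<noteq> {}" by (metis card.empty not_one_le_zero)
  then obtain h where h: "h \<in> E" "h \<in> H" by blast
  have h0: "h \<noteq> 0" using h z by blast
  define C where "C = E - H"
  have cC: "card C = 2 * k + 6" unfolding C_def using card_split_H[of E H] cE cEH k by simp
  have CH: "C \<subseteq> UNIV - H" unfolding C_def by blast
  define Bad where "Bad = {c\<in>C. c + h \<notin> C}"
  have "Bad \<subseteq> (\<lambda>m. m + h) ` ((UNIV - H) - C)"
  proof
    fix c assume c: "c \<in> Bad"
    then have "c + h \<in> (UNIV - H) - C" unfolding Bad_def using CH H_add_out_in[OF H _ h(2)] by blast
    moreover have "c = (c + h) + h" by simp
    ultimately show "c \<in> (\<lambda>m. m + h) ` ((UNIV - H) - C)" by blast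
  qed
  then have "card Bad \<le> card ((\<lambda>m. m + h) ` ((UNIV - H) - C))" by (intro card_mono) simp_all
  also have "\<dots> \<le> card ((UNIV - H) - C)" by (rule card_image_le) simp
  also have "\<dots> = 16 - (2 * k + 6)" using card_Diff_subset[OF _ CH] coset_card[OF H] cC by simp
  finally have lt: "card Bad < card C" using cC k by simp
  have "C - Bad \<noteq> {}"
  proof
    assume "C - Bad = {}" then have "C \<subseteq> Bad" by blast
    then have "card C \<le> card Bad" by (intro card_mono) simp_all
    then show False using lt by simp
  qed
  then obtain c1 where c1: "c1 \<in> C" "c1 + h \<in> C" unfolding Bad_def by blast
  have c1H: "c1 \<notin> H" "c1 + h \<notin> H" using c1 unfolding C_def by auto
  have d1: "c1 \<noteq> h" using c1H h by blast
  have d2: "c1 + h \<noteq> h" using c1H H0[OF H] add_right_eq[of c1 h] by auto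
  have d3: "c1 + h \<noteq> c1" using h0 by (simp add: add_left_eq)
  define A where "A = {h, c1, c1 + h}"
  have AE: "A \<subseteq> E" unfolding A_def using h c1 unfolding C_def by blast
  have sA: "sum id A = 0" unfolding A_def using d1 d2 d3 by simp
  have cA: "card A = 3" unfolding A_def using d1 d2 d3 by simp
  define E' where "E' = E - A"
  have cE': "card E' = 3 * (k - 1) + 4" unfolding E'_def using cE cA AE k by (simp add: card_Diff_subset)
  have sE': "sum id E' = 0" unfolding E'_def using sum_diff2[OF AE sE sA] .
  have z': "0 \<notin> E'" unfolding E'_def using z by blast
  have E'H: "E' \<inter> H = (E \<inter> H) - {h}" unfolding E'_def A_def using c1H by auto
  have "card (E' \<inter> H) = k - 3" unfolding E'H using cEH h by (simp add: card_Diff_singleton)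
  then have "ex_prop (k - 1) E' H" unfolding ex_prop_def using H sE' z' cE' by simp
  then show ?thesis by blast
qed

lemma ex_all: assumes "2 \<le> k" "k \<le> 5" shows "\<exists>E H. ex_prop k E H"
proof -
  have "\<forall>j \<le> 3. \<exists>E H. ex_prop (5 - j) E H"
  proof (intro allI impI)
    fix j :: nat assume "j \<le> 3"
    then show "\<exists>E H. ex_prop (5 - j) E H"
    proof (induct j)
      case 0 then show ?case using ex5 by simp
    next
      case (Suc j)
      then obtain E H where e: "ex_prop (5 - j) E H" by auto
      have j3: "3 \<le> 5 - j" using Suc.prems by simp
      obtain E' where "ex_prop (5 - j - 1) E' H" using ex_step[OF j3 _ e] by auto
      moreover have "5 - j - 1 = 5 - Suc j" by simp
      ultimately show ?case by auto
    qed
  qed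
  moreover have "5 - k \<le> 3" "5 - (5 - k) = k" using assms by auto
  ultimately show ?thesis by metis
qed

lemma lower:
  assumes "2 \<le> k" "k \<le> 5"
  shows "\<exists>S :: C2_5 multiset. size S = 3 * k + 3 \<and> \<not> dz S k"
proof -
  obtain E H where ex: "ex_prop k E H" using ex_all[OF assms] by blast
  have H: "subgroup_index2 H" and sE: "sum id E = 0" and z: "0 \<notin> E" and cE: "card E = 3 * k + 4"
    and cEH: "card (E \<inter> H) = k - 2" using ex unfolding ex_prop_def by auto
  define B where "B = mset_set E"
  have zB: "zero_sum B" unfolding B_def using sE by (simp add: zs_mset_set)
  have fB: "size (filter_mset (\<lambda>g. g \<in> H) B) \<le> k - 2"
    unfolding B_def using cEH by (simp add: Int_def)
  have nd: "\<not> dz B (Suc k)"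
    by (rule P2[OF H]) (use sqf_mset_set z cE fB assms in \<open>auto simp: B_def\<close>)
  have "E \<noteq> {}" using cE by auto
  then obtain g where g: "g \<in> E" by blast
  then have gB: "g \<in># B" unfolding B_def by simp
  have "size (B - {#g#}) = 3 * k + 3" using gB cE unfolding B_def by (simp add: size_Diff_submset)
  moreover have "\<not> dz (B - {#g#}) k" using dz_extend[OF zB gB] nd by blast
  ultimately show ?thesis by blast
qed

lemma Dk: assumes "2 \<le> k" "k \<le> 5" shows "Davenport_k TYPE(C2_5) k = 3 * k + 4"
  unfolding Davenport_k_def
proof (rule Least_equality)
  show "\<forall>S :: C2_5 multiset. 3 * k + 4 \<le> size S \<longrightarrow> dz S k" using P1 assms by auto
next
  fix l assume l: "\<forall>S :: C2_5 multiset. l \<le> size S \<longrightarrow> dz S k"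
  show "3 * k + 4 \<le> l"
  proof (rule ccontr)
    assume "\<not> 3 * k + 4 \<le> l"
    then have "l \<le> 3 * k + 3" by simp
    obtain S :: "C2_5 multiset" where "size S = 3 * k + 3" "\<not> dz S k" using lower[OF assms] by blast
    then show False using l \<open>l \<le> 3 * k + 3\<close> by auto
  qed
qed


theorem proposition7p11:
  fixes B :: "C2_5 multiset" and k :: nat
  assumes "zero_sum B" and "2 \<le> k" and "k \<le> 5"
  shows "(Max (lengths B) = k \<and> size B = Davenport_k TYPE(C2_5) k) \<longleftrightarrow>
         (size B = 4 + 3 * k \<and> squarefree_seq B \<and> (0::C2_5) \<notin># B \<and>
          (\<exists>T H. T \<subseteq># B \<and> size T = k - 2 \<and> subgroup_index2 H \<and>
                 (\<forall>g \<in># B - T. g \<in> UNIV - H)))"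
proof
  assume L: "Max (lengths B) = k \<and> size B = Davenport_k TYPE(C2_5) k"
  have sz: "size B = 3 * k + 4" using L Dk[OF assms(2,3)] by simp
  have dk: "dz B k" using P1[OF assms(3)] sz by simp
  have nd: "\<not> dz B (Suc k)" using max_lengths_iff[OF assms(1) dk] L by simp
  have P: "squarefree_seq B \<and> 0 \<notin># B \<and> (\<exists>H. subgroup_index2 H \<and> card (set_mset B \<inter> H) \<le> k - 2)"
    using P4[OF assms(2,3,1) sz nd] .
  then obtain H where H: "subgroup_index2 H" and cH: "card (set_mset B \<inter> H) \<le> k - 2" by blast
  have sqf: "squarefree_seq B" and z: "0 \<notin># B" using P by auto
  define Hp where "Hp = filter_mset (\<lambda>g. g \<in> H) B"
  define R where "R = filter_mset (\<lambda>g. g \<notin> H) B"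
  have BHR: "B = Hp + R" unfolding Hp_def R_def by (rule multiset_partition)
  have sHp: "size Hp = card (set_mset B \<inter> H)"
  proof -
    have "Hp = mset_set (set_mset B \<inter> H)" unfolding Hp_def
      using sqf_eq[OF sqf] by (metis filter_mset_mset_set finite_set_mset Int_def)
    then show ?thesis by simp
  qed
  have sR: "size R + size Hp = 3 * k + 4" using BHR sz by (metis size_union add.commute)
  have "(k - 2) - size Hp \<le> size R" using sR by linarith
  then obtain R' where R': "R' \<subseteq># R" "size R' = (k - 2) - size Hp"
    using msub_size[of "(k - 2) - size Hp" R] by blast
  define T where "T = Hp + R'"
  have TB: "T \<subseteq># B" unfolding T_def using R'(1) BHR by simp
  have sT: "size T = k - 2" unfolding T_def using R'(2) sHp cH by simp
  have "B - T = R - R'" unfolding T_def using BHR by simp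
  then have "\<forall>g \<in># B - T. g \<in> UNIV - H" unfolding R_def
    by (metis (mono_tags, lifting) DiffI UNIV_I in_diffD mem_Collect_eq set_mset_filter)
  then show "size B = 4 + 3 * k \<and> squarefree_seq B \<and> (0::C2_5) \<notin># B \<and>
          (\<exists>T H. T \<subseteq># B \<and> size T = k - 2 \<and> subgroup_index2 H \<and> (\<forall>g \<in># B - T. g \<in> UNIV - H))"
    using sz sqf z TB sT H by auto
next
  assume R: "size B = 4 + 3 * k \<and> squarefree_seq B \<and> (0::C2_5) \<notin># B \<and>
          (\<exists>T H. T \<subseteq># B \<and> size T = k - 2 \<and> subgroup_index2 H \<and> (\<forall>g \<in># B - T. g \<in> UNIV - H))"
  then obtain T H where T: "T \<subseteq># B" "size T = k - 2" and H: "subgroup_index2 H"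
    and out: "\<forall>g \<in># B - T. g \<in> UNIV - H" by blast
  have sz: "size B = 3 * k + 4" using R by simp
  have fl: "size (filter_mset (\<lambda>g. g \<in> H) B) \<le> k - 2" using filter_le_T[OF T(1) out] T(2) by simp
  have nd: "\<not> dz B (Suc k)" using P2[OF H _ _ sz fl assms(2)] R by blast
  have dk: "dz B k" using P1[OF assms(3)] sz by simp
  have "Max (lengths B) = k" using max_lengths_iff[OF assms(1) dk] nd by simp
  then show "Max (lengths B) = k \<and> size B = Davenport_k TYPE(C2_5) k" using Dk[OF assms(2,3)] sz by simp
qed



end
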